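(* Let $T>0$, $r\ge0$, $\rho\in[-1,1]$, $\alpha\ge0$, $K>0$, and let $\mu,\sigma>0,a,b>0$ be constants. Let $P$ be the writer's price of a European put with strike $K$, i.e. the solution on $(0,\infty)^2\times[0,T]$ of $$P_t+\tilde\mu SP_S+rHP_H+\tfrac12\sigma^2S^2P_{SS}+\rho\sigma bSHP_{SH}+\tfrac12b^2H^2P_{HH}-rP=-\alpha\sqrt{1-\rho^2}\sigma S|P_S|,\quad P(S,H,T)=(K-S)_+,$$ with $\tilde\mu=\mu-(a-r)\rho\sigma/b$. Then $P$ does not depend on $H$ and, with $\tau=T-t$ and $\delta=r-\tilde\mu+\alpha\sqrt{1-\rho^2}\sigma$, $$P(S,t)=Ke^{-r\tau}\Phi\Big(\frac{\ln(K/S)-(r-\delta-\frac12\sigma^2)\tau}{\sigma\sqrt\tau}\Big)-Se^{-\delta\tau}\Phi\Big(\frac{\ln(K/S)-(r-\delta+\frac12\sigma^2)\tau}{\sigma\sqrt\tau}\Big),$$ where $\Phi$ is the standard normal cumulative distribution function.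
   Context: Model: non-traded asset $dS_t=\mu S_tdt+\sigma S_tdZ_t$ and traded asset $dH_t=aH_tdt+bH_tdW_t$, geometric Brownian motions with $Z,W$ standard Brownian motions of correlation $\rho$; $r$ is the riskless rate and $\alpha$ the writer's instantaneous Sharpe ratio. The PDE solution is the continuous viscosity solution in the class of locally bounded $u$ with $u/(1+(|\ln S|+|\ln H|)^k)\to0$ uniformly in $t$ as $|\ln S|+|\ln H|\to\infty$ for some $k>0$. *)

theory Defs
  imports "HOL-Probability.Probability"
begin

definition Phi :: "real \<Rightarrow> real" where
  "Phi x = measure (density lborel std_normal_density) {..x}"

definition dom_open :: "real \<Rightarrow> (real \<times> real \<times> real) set" where
  "dom_open T = {(S, H, t). 0 < S \<and> 0 < H \<and> 0 < t \<and> t < T}"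

definition dom_closed :: "real \<Rightarrow> (real \<times> real \<times> real) set" where
  "dom_closed T = {(S, H, t). 0 < S \<and> 0 < H \<and> 0 \<le> t \<and> t \<le> T}"

text \<open>C^2 test functions on an open set D, given together with their first partials
  (phiS, phiH, phit) and the spatial second partials phiSS, phiSH, phiHH
  (the remaining second partials, involving t, are existentially quantified).\<close>
definition C2_test ::
  "(real \<times> real \<times> real) set \<Rightarrow> (real \<times> real \<times> real \<Rightarrow> real) \<Rightarrow>
   (real \<times> real \<times> real \<Rightarrow> real) \<Rightarrow> (real \<times> real \<times> real \<Rightarrow> real) \<Rightarrow> (real \<times> real \<times> real \<Rightarrow> real) \<Rightarrow>
   (real \<times> real \<times> real \<Rightarrow> real) \<Rightarrow> (real \<times> real \<times> real \<Rightarrow> real) \<Rightarrow> (real \<times> real \<times> real \<Rightarrow> real) \<Rightarrow> bool"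
where
  "C2_test D phi phit phiS phiH phiSS phiSH phiHH \<longleftrightarrow>
     (\<exists>phiSt phiHt. 
        (\<forall>x\<in>D. (phi has_derivative (\<lambda>(dS, dH, dt). phiS x * dS + phiH x * dH + phit x * dt)) (at x)) \<and>
        (\<forall>x\<in>D. (phiS has_derivative (\<lambda>(dS, dH, dt). phiSS x * dS + phiSH x * dH + phiSt x * dt)) (at x)) \<and>
        (\<forall>x\<in>D. (phiH has_derivative (\<lambda>(dS, dH, dt). phiSH x * dS + phiHH x * dH + phiHt x * dt)) (at x)) \<and>
        continuous_on D phit \<and> continuous_on D phiSS \<and> continuous_on D phiSH \<and>
        continuous_on D phiHH \<and> continuous_on D phiSt \<and> continuous_on D phiHt)"

definition pde_op :: "real \<Rightarrow> real \<Rightarrow> real \<Rightarrow> real \<Rightarrow> real \<Rightarrow> real \<Rightarrow> real \<Rightarrow> real \<Rightarrow> real \<Rightarrow> real \<Rightarrow> real \<Rightarrow> real \<Rightarrow> real \<Rightarrow> real \<Rightarrow> real \<Rightarrow> real \<Rightarrow> real"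
where
  "pde_op mu sig a b r rho alpha S H u pt pS pH pSS pSH pHH =
     (let mut = mu - (a - r) * rho * sig / b in
      pt + mut * S * pS + r * H * pH + 1/2 * sig\<^sup>2 * S\<^sup>2 * pSS + rho * sig * b * S * H * pSH
        + 1/2 * b\<^sup>2 * H\<^sup>2 * pHH - r * u + alpha * sqrt (1 - rho\<^sup>2) * sig * S * \<bar>pS\<bar>)"

definition visc_sub where
  "visc_sub mu sig a b r rho alpha T u \<longleftrightarrow>
     (\<forall>phi phit phiS phiH phiSS phiSH phiHH S H t.
        C2_test (dom_open T) phi phit phiS phiH phiSS phiSH phiHH \<longrightarrow> (S, H, t) \<in> dom_open T \<longrightarrow>
        (\<exists>e>0. \<forall>y\<in>dom_open T. dist y (S, H, t) < e \<longrightarrow> u y - phi y \<le> u (S, H, t) - phi (S, H, t)) \<longrightarrow>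
        pde_op mu sig a b r rho alpha S H (u (S, H, t)) (phit (S, H, t)) (phiS (S, H, t)) (phiH (S, H, t))
          (phiSS (S, H, t)) (phiSH (S, H, t)) (phiHH (S, H, t)) \<ge> 0)"

definition visc_super where
  "visc_super mu sig a b r rho alpha T u \<longleftrightarrow>
     (\<forall>phi phit phiS phiH phiSS phiSH phiHH S H t.
        C2_test (dom_open T) phi phit phiS phiH phiSS phiSH phiHH \<longrightarrow> (S, H, t) \<in> dom_open T \<longrightarrow>
        (\<exists>e>0. \<forall>y\<in>dom_open T. dist y (S, H, t) < e \<longrightarrow> u y - phi y \<ge> u (S, H, t) - phi (S, H, t)) \<longrightarrow>
        pde_op mu sig a b r rho alpha S H (u (S, H, t)) (phit (S, H, t)) (phiS (S, H, t)) (phiH (S, H, t))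
          (phiSS (S, H, t)) (phiSH (S, H, t)) (phiHH (S, H, t)) \<le> 0)"

definition growth_class :: "real \<Rightarrow> (real \<times> real \<times> real \<Rightarrow> real) \<Rightarrow> bool" where
  "growth_class T u \<longleftrightarrow>
     (\<forall>x\<in>dom_closed T. \<exists>e>0. bounded (u ` (dom_closed T \<inter> ball x e))) \<and>
     (\<exists>k>0. \<forall>\<epsilon>>0. \<exists>R. \<forall>S H t. (S, H, t) \<in> dom_closed T \<longrightarrow> \<bar>ln S\<bar> + \<bar>ln H\<bar> \<ge> R \<longrightarrow>
        \<bar>u (S, H, t)\<bar> / (1 + (\<bar>ln S\<bar> + \<bar>ln H\<bar>) powr k) \<le> \<epsilon>)"

definition writer_put_price where
  "writer_put_price mu sig a b r rho alpha T K u \<longleftrightarrow>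
     continuous_on (dom_closed T) u \<and> growth_class T u \<and>
     visc_sub mu sig a b r rho alpha T u \<and> visc_super mu sig a b r rho alpha T u \<and>
     (\<forall>S H. 0 < S \<longrightarrow> 0 < H \<longrightarrow> u (S, H, T) = max (K - S) 0)"

end

theory Submission
  imports Defs "HOL-Real_Asymp.Real_Asymp"
begin


lemma Phi_cdf: "Phi = cdf std_normal_distribution"
  by (auto simp: Phi_def cdf_def)

lemma snd_cont: "continuous_on A std_normal_density"
  unfolding normal_density_def by (intro continuous_intros) auto

lemma snd_le1: "std_normal_density x \<le> 1"
proof -
  have "exp (- x\<^sup>2 / 2) \<le> 1" by simp
  moreover have "1 \<le> sqrt (2 * pi)" using pi_gt3 by simp
  ultimately have "exp (- x\<^sup>2 / 2) \<le> sqrt (2 * pi)" by linarith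
  then show ?thesis unfolding std_normal_density_def
    by (simp add: divide_le_eq)
qed

lemma Phi_nonneg: "0 \<le> Phi x"
  by (simp add: Phi_def)

lemma Phi_le1: "Phi x \<le> 1"
  unfolding Phi_cdf using real_distribution.cdf_bounded_prob[OF real_dist_normal_dist] by simp

lemma Phi_top: "(Phi \<longlongrightarrow> 1) at_top"
  unfolding Phi_cdf using real_distribution.cdf_lim_at_top_prob[OF real_dist_normal_dist] by simp

lemma Phi_bot: "(Phi \<longlongrightarrow> 0) at_bot"
  unfolding Phi_cdf using finite_borel_measure.cdf_lim_at_bot real_distribution.finite_borel_measure_M[OF real_dist_normal_dist] by blast

lemma Phi_set: "measure std_normal_distribution A = (LINT t:A|lborel. std_normal_density t)"
  if "A \<in> sets borel"
proof -
  interpret prob_space "std_normal_distribution" by (rule prob_space_normal_density) simp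
  have "measure std_normal_distribution A = integral\<^sup>L std_normal_distribution (indicator A)"
    using that by simp
  also have "\<dots> = integral\<^sup>L lborel (\<lambda>t. std_normal_density t *\<^sub>R indicator A t)"
    by (rule integral_density) (use that in auto)
  finally show ?thesis unfolding set_lebesgue_integral_def by (simp add: mult.commute)
qed

lemma Phi_diff: "c < u \<Longrightarrow> Phi u = Phi c + integral {c..u} std_normal_density"
proof -
  assume cu: "c < u"
  have "Phi u - Phi c = measure std_normal_distribution {c<..u}"
    unfolding Phi_cdf
    by (rule finite_borel_measure.cdf_diff_eq[OF real_distribution.finite_borel_measure_M[OF real_dist_normal_dist] cu])
  also have "\<dots> = (LINT t:{c<..u}|lborel. std_normal_density t)" by (rule Phi_set) simp
  also have "\<dots> = (LINT t:{c<..<u}|lborel. std_normal_density t)"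
  proof (rule set_integral_cong_set)
    show "AE x in lborel. (x \<in> {c<..<u}) = (x \<in> {c<..u})"
      using AE_lborel_singleton[of u] by eventually_elim auto
  qed (simp_all add: set_borel_measurable_def)
  also have "\<dots> = integral {c<..<u} std_normal_density"
  proof (rule set_borel_integral_eq_integral)
    show "set_integrable lborel {c<..<u} std_normal_density"
      unfolding set_integrable_def
      by (rule integrable_mult_indicator) auto
  qed
  also have "\<dots> = integral {c..u} std_normal_density"
    by (simp add: integral_open_interval_real)
  finally show ?thesis by simp
qed

lemma Phi_deriv: "(Phi has_real_derivative std_normal_density x) (at x)"
proof -
  define c where "c = x - 1"
  have "((\<lambda>y. integral {c..y} std_normal_density) has_real_derivative std_normal_density x) (at x within {c..x+1})"
    by (rule integral_has_real_derivative) (auto simp: snd_cont c_def)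
  then have "((\<lambda>y. integral {c..y} std_normal_density) has_real_derivative std_normal_density x) (at x)"
    using at_within_Icc_at[of c x "x+1"] by (simp add: c_def)
  then have "((\<lambda>y. Phi c + integral {c..y} std_normal_density) has_real_derivative std_normal_density x) (at x)"
    by (auto intro!: derivative_eq_intros)
  then show ?thesis
    by (rule has_field_derivative_transform_within_open[where S="{c<..}"])
       (auto simp: c_def Phi_diff)
qed

lemma Phi_isCont: "isCont Phi x"
  by (rule DERIV_isCont[OF Phi_deriv])

lemma Phi_cont[continuous_intros]: "continuous_on A f \<Longrightarrow> continuous_on A (\<lambda>x. Phi (f x))"
proof -
  assume "continuous_on A f"
  moreover have "continuous_on UNIV Phi"
    by (rule continuous_at_imp_continuous_on) (simp add: Phi_isCont)
  ultimately show ?thesis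
    using continuous_on_compose2[of UNIV Phi A f] by simp
qed

lemma Phi_lip: "\<bar>Phi a - Phi b\<bar> \<le> \<bar>a - b\<bar>"
proof -
  have *: "\<bar>Phi b - Phi a\<bar> \<le> b - a" if "a < b" for a b
  proof -
    obtain z where z: "Phi b - Phi a = (b - a) * std_normal_density z"
      using MVT2[of a b Phi "std_normal_density"] Phi_deriv \<open>a < b\<close> by blast
    have "(b - a) * std_normal_density z \<le> (b - a)"
      by (rule mult_left_le) (use snd_le1 \<open>a < b\<close> in auto)
    moreover have "0 \<le> (b - a) * std_normal_density z" using \<open>a < b\<close> by simp
    ultimately show ?thesis using z by simp
  qed
  show ?thesis
    using *[of a b] *[of b a] by (cases a b rule: linorder_cases) auto
qed

lemmas has_derivative_Phi[derivative_intros] = Phi_deriv[THEN DERIV_compose_FDERIV]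

lemma Phi_tendsto[tendsto_intros]: "(f \<longlongrightarrow> l) F \<Longrightarrow> ((\<lambda>x. Phi (f x)) \<longlongrightarrow> Phi l) F"
  by (rule isCont_tendsto_compose[OF Phi_isCont])


lemma e1: fixes L c1 c2 r dl sig q :: real
  assumes "c1 = r - dl - 1/2 * sig\<^sup>2" "c2 = r - dl + 1/2 * sig\<^sup>2" "0 < sig" "0 < q"
  shows "- ((L - c2 * (q * q)) / (sig * q))\<^sup>2 / 2 = - ((L - c1 * (q * q)) / (sig * q))\<^sup>2 / 2 + (L - (r - dl) * (q * q))"
proof -
  have "(L - c1 * (q * q))\<^sup>2 - (L - c2 * (q * q))\<^sup>2 = 2 * (sig * q)\<^sup>2 * (L - (r - dl) * (q * q))"
    unfolding assms(1,2) by (simp add: power2_eq_square algebra_simps)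
  then have "((L - c1 * (q * q)) / (sig * q))\<^sup>2 - ((L - c2 * (q * q)) / (sig * q))\<^sup>2 = 2 * (L - (r - dl) * (q * q))"
    using assms(3,4) by (simp add: power_divide diff_divide_distrib[symmetric])
  then show ?thesis by simp
qed

lemma alg: fixes S q sig r dl K ER PA E PB pB :: real
  assumes "0 < S" "0 < q" "0 < sig"
  shows "r * K * ER * PA - dl * S * E * PB - S * E * pB * sig / (2 * q) + (r - dl) * S * (- E * PB)
     + 1/2 * sig\<^sup>2 * S\<^sup>2 * (E * pB / (S * sig * q)) - r * (K * ER * PA - S * E * PB) = 0"
proof -
  have "1/2 * sig\<^sup>2 * S\<^sup>2 * (E * pB / (S * sig * q)) = S * E * pB * sig / (2 * q)"
    using assms by (simp add: power2_eq_square field_simps)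
  then show ?thesis by (simp add: algebra_simps)
qed

lemma snd_cont'[continuous_intros]: "continuous_on A f \<Longrightarrow> continuous_on A (\<lambda>x. std_normal_density (f x))"
  unfolding normal_density_def by (intro continuous_intros) auto

locale bs =
  fixes K r dl sig T :: real
  assumes K_pos: "0 < K" and sig_pos: "0 < sig"
begin

definition c1 where "c1 = r - dl - 1/2 * sig\<^sup>2"
definition c2 where "c2 = r - dl + 1/2 * sig\<^sup>2"

definition A where "A S tau = (ln (K / S) - c1 * tau) / (sig * sqrt tau)"
definition B where "B S tau = (ln (K / S) - c2 * tau) / (sig * sqrt tau)"

definition AS where "AS S tau = - 1 / (S * sig * sqrt tau)"
definition At where "At S tau = (- c1 * (sig * sqrt tau) - (ln (K / S) - c1 * tau) * (sig / (2 * sqrt tau))) / (sig * sqrt tau)\<^sup>2"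
definition Bt where "Bt S tau = (- c2 * (sig * sqrt tau) - (ln (K / S) - c2 * tau) * (sig / (2 * sqrt tau))) / (sig * sqrt tau)\<^sup>2"

lemma A_has_derivative[derivative_intros]:
  assumes f: "(f has_derivative f') (at x within s)" and g: "(g has_derivative g') (at x within s)"
    and pos: "0 < f x" "0 < g x"
  shows "((\<lambda>y. A (f y) (g y)) has_derivative (\<lambda>h. AS (f x) (g x) * f' h + At (f x) (g x) * g' h)) (at x within s)"
  unfolding A_def
  apply (rule has_derivative_eq_rhs)
   apply (rule derivative_eq_intros f g | use pos sig_pos K_pos in simp)+
  apply (rule ext)
  using pos sig_pos K_pos
  apply (simp add: AS_def At_def power2_eq_square field_simps)
  done


lemma B_has_derivative[derivative_intros]:
  assumes f: "(f has_derivative f') (at x within s)" and g: "(g has_derivative g') (at x within s)"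
    and pos: "0 < f x" "0 < g x"
  shows "((\<lambda>y. B (f y) (g y)) has_derivative (\<lambda>h. AS (f x) (g x) * f' h + Bt (f x) (g x) * g' h)) (at x within s)"
  unfolding B_def
  apply (rule has_derivative_eq_rhs)
   apply (rule derivative_eq_intros f g | use pos sig_pos K_pos in simp)+
  apply (rule ext)
  using pos sig_pos K_pos
  apply (simp add: AS_def Bt_def power2_eq_square field_simps)
  done

lemma sqrt_sq: "0 < tau \<Longrightarrow> sqrt tau * sqrt tau = tau"
  by simp

lemma AB_diff: "0 < tau \<Longrightarrow> A S tau - B S tau = sig * sqrt tau"
  unfolding A_def B_def c1_def c2_def using sig_pos
  by (simp add: field_simps power2_eq_square)

lemma At_Bt: "0 < tau \<Longrightarrow> At S tau - Bt S tau = sig / (2 * sqrt tau)"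
  unfolding At_def Bt_def c1_def c2_def using sig_pos
  by (simp add: field_simps power2_eq_square)

lemma phi_id:
  assumes S: "0 < S" and tau: "0 < tau"
  shows "K * exp (- r * tau) * std_normal_density (A S tau) = S * exp (- dl * tau) * std_normal_density (B S tau)"
proof -
  define q where "q = sqrt tau"
  have q: "0 < q" "tau = q * q" using tau by (auto simp: q_def)
  define L where "L = ln (K / S)"
  have AL: "A S tau = (L - c1 * (q * q)) / (sig * q)" unfolding A_def L_def q_def using tau by simp
  have BL: "B S tau = (L - c2 * (q * q)) / (sig * q)" unfolding B_def L_def q_def using tau by simp
  have e': "- ((L - c2 * (q * q)) / (sig * q))\<^sup>2 / 2 = - ((L - c1 * (q * q)) / (sig * q))\<^sup>2 / 2 + (L - (r - dl) * (q * q))"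
    by (rule e1[OF c1_def c2_def sig_pos q(1)])
  have e: "- (B S tau)\<^sup>2 / 2 = - (A S tau)\<^sup>2 / 2 + (L - (r - dl) * tau)"
    using e' unfolding AL BL by (simp add: q(2))
  have eL: "exp L = K / S" unfolding L_def using S K_pos by simp
  have "S * exp (- dl * tau) * std_normal_density (B S tau)
      = S * exp (- dl * tau) * ((1 / sqrt (2 * pi)) * (exp (- (A S tau)\<^sup>2 / 2) * exp L * exp (- (r - dl) * tau)))"
    unfolding std_normal_density_def e exp_add[symmetric] by (simp add: algebra_simps)
  also have "\<dots> = K * (exp (- dl * tau) * exp (- (r - dl) * tau)) * ((1 / sqrt (2 * pi)) * exp (- (A S tau)\<^sup>2 / 2))"
    unfolding eL using S by (simp add: field_simps)
  also have "exp (- dl * tau) * exp (- (r - dl) * tau) = exp (- r * tau)"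
    unfolding exp_add[symmetric] by (simp add: algebra_simps)
  finally show ?thesis unfolding std_normal_density_def by simp
qed

definition vf where "vf = (\<lambda>x::real\<times>real\<times>real. K * exp (- r * (T - snd (snd x))) * Phi (A (fst x) (T - snd (snd x))) - fst x * exp (- dl * (T - snd (snd x))) * Phi (B (fst x) (T - snd (snd x))))"
definition vS where "vS = (\<lambda>x::real\<times>real\<times>real. - exp (- dl * (T - snd (snd x))) * Phi (B (fst x) (T - snd (snd x))))"
definition vSS where "vSS = (\<lambda>x::real\<times>real\<times>real. exp (- dl * (T - snd (snd x))) * std_normal_density (B (fst x) (T - snd (snd x))) / (fst x * sig * sqrt (T - snd (snd x))))"
definition vt where "vt = (\<lambda>x::real\<times>real\<times>real. r * K * exp (- r * (T - snd (snd x))) * Phi (A (fst x) (T - snd (snd x))) - dl * fst x * exp (- dl * (T - snd (snd x))) * Phi (B (fst x) (T - snd (snd x))) - fst x * exp (- dl * (T - snd (snd x))) * std_normal_density (B (fst x) (T - snd (snd x))) * sig / (2 * sqrt (T - snd (snd x))))"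
definition vSt where "vSt = (\<lambda>x::real\<times>real\<times>real. - dl * exp (- dl * (T - snd (snd x))) * Phi (B (fst x) (T - snd (snd x))) + exp (- dl * (T - snd (snd x))) * std_normal_density (B (fst x) (T - snd (snd x))) * Bt (fst x) (T - snd (snd x)))"

lemma phiA_eq: "0 < S \<Longrightarrow> 0 < tau \<Longrightarrow>
  std_normal_density (A S tau) = S * exp (- dl * tau) * std_normal_density (B S tau) / (K * exp (- r * tau))"
  using phi_id[of S tau] K_pos by (simp add: field_simps)

lemma At_eq: "0 < tau \<Longrightarrow> At S tau = Bt S tau + sig / (2 * sqrt tau)"
  using At_Bt[of tau S] by simp

lemma d_tau: "((\<lambda>y::real\<times>real\<times>real. T - snd (snd y)) has_derivative (\<lambda>h. 0 - snd (snd h))) F"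
  by (rule has_derivative_diff[OF has_derivative_const has_derivative_snd[OF has_derivative_snd[OF has_derivative_ident]]])

lemma d_fst: "((\<lambda>y::real\<times>real\<times>real. fst y) has_derivative (\<lambda>h. fst h)) F"
  by (rule has_derivative_fst[OF has_derivative_ident])

lemma d_exp: "((\<lambda>y::real\<times>real\<times>real. exp (c * (T - snd (snd y)))) has_derivative
   (\<lambda>h. c * (0 - snd (snd h)) * exp (c * (T - snd (snd x))))) (at x)"
  by (rule DERIV_compose_FDERIV[OF DERIV_exp has_derivative_mult_right[OF d_tau]])

lemma d_PhiA: "0 < S \<Longrightarrow> t < T \<Longrightarrow>
  ((\<lambda>y::real\<times>real\<times>real. Phi (A (fst y) (T - snd (snd y)))) has_derivative
   (\<lambda>h. (AS S (T - t) * fst h + At S (T - t) * (0 - snd (snd h)))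
        * std_normal_density (A S (T - t)))) (at (S,H,t))"
  by (rule has_derivative_eq_rhs[OF has_derivative_Phi[OF A_has_derivative[OF d_fst d_tau]]]) auto

lemma d_PhiB: "0 < S \<Longrightarrow> t < T \<Longrightarrow>
  ((\<lambda>y::real\<times>real\<times>real. Phi (B (fst y) (T - snd (snd y)))) has_derivative
   (\<lambda>h. (AS S (T - t) * fst h + Bt S (T - t) * (0 - snd (snd h)))
        * std_normal_density (B S (T - t)))) (at (S,H,t))"
  by (rule has_derivative_eq_rhs[OF has_derivative_Phi[OF B_has_derivative[OF d_fst d_tau]]]) auto

lemma vf_deriv:
  assumes S: "0 < S" and t: "t < T"
  shows "(vf has_derivative (\<lambda>(dS, dH, dt). vS (S,H,t) * dS + 0 * dH + vt (S,H,t) * dt)) (at (S,H,t))"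
  unfolding vf_def
  apply (rule has_derivative_eq_rhs[OF has_derivative_diff[OF
     has_derivative_mult[OF has_derivative_mult_right[OF d_exp] d_PhiA[OF S t]]
     has_derivative_mult[OF has_derivative_mult[OF d_fst d_exp] d_PhiB[OF S t]]]])
  apply (rule ext)
  apply clarsimp
  using S t K_pos sig_pos
  apply (simp add: vS_def vt_def AS_def phiA_eq At_eq field_simps)
  done

lemma vS_deriv:
  assumes S: "0 < S" and t: "t < T"
  shows "(vS has_derivative (\<lambda>(dS, dH, dt). vSS (S,H,t) * dS + 0 * dH + vSt (S,H,t) * dt)) (at (S,H,t))"
  unfolding vS_def
  apply (rule has_derivative_eq_rhs[OF has_derivative_mult[OF has_derivative_minus[OF d_exp] d_PhiB[OF S t]]])
  apply (rule ext)
  apply clarsimp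
  using S t K_pos sig_pos
  apply (simp add: vSS_def vSt_def AS_def field_simps)
  done

lemma vH_deriv: "((\<lambda>_::real\<times>real\<times>real. 0::real) has_derivative (\<lambda>(dS, dH, dt). 0 * dS + 0 * dH + 0 * dt)) F"
  by (rule has_derivative_eq_rhs[OF has_derivative_const]) auto

lemma vS_nonpos: "vS x \<le> 0"
  unfolding vS_def using Phi_nonneg by simp

lemma cont_vt: "continuous_on (dom_open T) vt"
  unfolding vt_def A_def B_def
  by (intro continuous_intros) (use sig_pos K_pos in \<open>auto simp: dom_open_def\<close>)

lemma cont_vSS: "continuous_on (dom_open T) vSS"
  unfolding vSS_def A_def B_def
  by (intro continuous_intros) (use sig_pos K_pos in \<open>auto simp: dom_open_def\<close>)

lemma cont_vSt: "continuous_on (dom_open T) vSt"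
  unfolding vSt_def A_def B_def Bt_def
  by (intro continuous_intros) (use sig_pos K_pos in \<open>auto simp: dom_open_def\<close>)

lemma C2_v: "C2_test (dom_open T) vf vt vS (\<lambda>_. 0) vSS (\<lambda>_. 0) (\<lambda>_. 0)"
proof -
  have 1: "\<forall>x\<in>dom_open T. (vf has_derivative (\<lambda>(dS, dH, dt). vS x * dS + 0 * dH + vt x * dt)) (at x)"
    using vf_deriv by (auto simp: dom_open_def)
  have 2: "\<forall>x\<in>dom_open T. (vS has_derivative (\<lambda>(dS, dH, dt). vSS x * dS + 0 * dH + vSt x * dt)) (at x)"
    using vS_deriv by (auto simp: dom_open_def)
  have 3: "\<forall>x\<in>dom_open T. ((\<lambda>_::real\<times>real\<times>real. 0::real) has_derivative (\<lambda>(dS, dH, dt). 0 * dS + 0 * dH + 0 * dt)) (at x)"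
    using vH_deriv by auto
  show ?thesis
    unfolding C2_test_def
    apply (rule exI[of _ vSt], rule exI[of _ "\<lambda>_. 0"])
    using 1 2 3 cont_vt cont_vSS cont_vSt by (simp add: continuous_on_const)
qed

lemma pde_v:
  assumes S: "0 < S" and t: "t < T"
    and dl_eq: "dl = r - (mu - (a - r) * rho * sig / b) + alpha * sqrt (1 - rho\<^sup>2) * sig"
  shows "pde_op mu sig a b r rho alpha S H (vf (S,H,t)) (vt (S,H,t)) (vS (S,H,t)) 0 (vSS (S,H,t)) 0 0 = 0"
proof -
  have "\<bar>vS (S,H,t)\<bar> = - vS (S,H,t)" using vS_nonpos[of "(S,H,t)"] by simp
  then have "pde_op mu sig a b r rho alpha S H (vf (S,H,t)) (vt (S,H,t)) (vS (S,H,t)) 0 (vSS (S,H,t)) 0 0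
     = vt (S,H,t) + (r - dl) * S * vS (S,H,t) + 1/2 * sig\<^sup>2 * S\<^sup>2 * vSS (S,H,t) - r * vf (S,H,t)"
    unfolding pde_op_def Let_def dl_eq by (simp add: algebra_simps)
  also have "\<dots> = 0"
    using alg[where S=S and q="sqrt (T - t)" and sig=sig and r=r and dl=dl and K=K and ER="exp (- r * (T - t))" and PA="Phi (A S (T - t))"
               and E="exp (- dl * (T - t))" and PB="Phi (B S (T - t))" and pB="std_normal_density (B S (T - t))"] S t sig_pos
    unfolding vt_def vS_def vSS_def vf_def by simp
  finally show ?thesis .
qed

end


context bs
begin

definition vc where "vc = (\<lambda>x::real\<times>real\<times>real. if snd (snd x) < T then vf x else max (K - fst x) 0)"

lemma vf_cont: "continuous_on {x::real\<times>real\<times>real. 0 < fst x \<and> snd (snd x) < T} vf"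
  unfolding vf_def A_def B_def
  by (intro continuous_intros) (use sig_pos K_pos in auto)

lemma open_U: "open {x::real\<times>real\<times>real. 0 < fst x \<and> snd (snd x) < T}"
  by (intro open_Collect_conj open_Collect_less continuous_intros)

lemma vc_cont_lt:
  assumes x: "0 < fst x" "snd (snd x) < T"
  shows "continuous (at x within D) vc"
proof -
  let ?U = "{x::real\<times>real\<times>real. 0 < fst x \<and> snd (snd x) < T}"
  have "isCont vf x"
    using vf_cont open_U x continuous_on_eq_continuous_at by blast
  moreover have "eventually (\<lambda>y. vc y = vf y) (nhds x)"
    using open_U x unfolding eventually_nhds vc_def by (intro exI[of _ ?U]) auto
  ultimately have "isCont vc x" using isCont_cong by blast
  then show ?thesis by (rule continuous_at_imp_continuous_within)
qed

lemma vf_split: "vf y = (K * exp (- r * (T - snd (snd y))) - fst y * exp (- dl * (T - snd (snd y)))) * Phi (A (fst y) (T - snd (snd y)))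
   + fst y * exp (- dl * (T - snd (snd y))) * (Phi (A (fst y) (T - snd (snd y))) - Phi (B (fst y) (T - snd (snd y))))"
  unfolding vf_def by (simp add: algebra_simps)

lemma vf_lim_T:
  assumes S0: "0 < S0"
  defines "D1 \<equiv> {y::real\<times>real\<times>real. 0 < fst y \<and> snd (snd y) < T}"
  shows "(vf \<longlongrightarrow> max (K - S0) 0) (at (S0, H0, T) within D1)"
proof -
  let ?F = "at (S0, H0, T) within D1"
  let ?tau = "\<lambda>y::real\<times>real\<times>real. T - snd (snd y)"
  have evD: "eventually (\<lambda>y. y \<in> D1) ?F"
    by (simp add: eventually_at_filter)
  have ev: "eventually (\<lambda>y. 0 < fst y \<and> 0 < ?tau y) ?F"
    using evD by eventually_elim (auto simp: D1_def)
  have fst_lim: "(fst \<longlongrightarrow> S0) ?F"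
    using tendsto_fst[OF tendsto_ident_at[of "(S0,H0,T)" D1]] by simp
  have tau_lim: "(?tau \<longlongrightarrow> 0) ?F"
    using tendsto_diff[OF tendsto_const[of T] tendsto_snd[OF tendsto_snd[OF tendsto_ident_at[of "(S0,H0,T)" D1]]]] by simp
  have sqrt_lim: "((\<lambda>y. sqrt (?tau y)) \<longlongrightarrow> 0) ?F"
    using tendsto_real_sqrt[OF tau_lim] by simp
  have t2: "((\<lambda>y. fst y * exp (- dl * ?tau y) * (Phi (A (fst y) (?tau y)) - Phi (B (fst y) (?tau y)))) \<longlongrightarrow> 0) ?F"
  proof (rule Lim_null_comparison)
    show "eventually (\<lambda>y. norm (fst y * exp (- dl * ?tau y) * (Phi (A (fst y) (?tau y)) - Phi (B (fst y) (?tau y))))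
        \<le> fst y * exp (- dl * ?tau y) * (sig * sqrt (?tau y))) ?F"
      using ev
    proof eventually_elim
      case (elim y)
      have "\<bar>Phi (A (fst y) (?tau y)) - Phi (B (fst y) (?tau y))\<bar> \<le> sig * sqrt (?tau y)"
        using Phi_lip[of "A (fst y) (?tau y)" "B (fst y) (?tau y)"] AB_diff[of "?tau y" "fst y"] elim sig_pos
        by simp
      then show ?case using elim
        by (simp add: abs_mult mult_left_mono)
    qed
    show "((\<lambda>y. fst y * exp (- dl * ?tau y) * (sig * sqrt (?tau y))) \<longlongrightarrow> 0) ?F"
      using tendsto_mult[OF tendsto_mult[OF fst_lim tendsto_exp[OF tendsto_mult[OF tendsto_const[of "- dl"] tau_lim]]]
                              tendsto_mult[OF tendsto_const[of sig] sqrt_lim]]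
      by simp
  qed
  have coef: "((\<lambda>y. K * exp (- r * ?tau y) - fst y * exp (- dl * ?tau y)) \<longlongrightarrow> K - S0) ?F"
    using tendsto_diff[OF tendsto_mult[OF tendsto_const[of K] tendsto_exp[OF tendsto_mult[OF tendsto_const[of "- r"] tau_lim]]]
                          tendsto_mult[OF fst_lim tendsto_exp[OF tendsto_mult[OF tendsto_const[of "- dl"] tau_lim]]]]
    by simp
  have num_lim: "((\<lambda>y. ln (K / fst y) - c1 * ?tau y) \<longlongrightarrow> ln (K / S0)) ?F"
    using tendsto_diff[OF tendsto_ln[OF tendsto_divide[OF tendsto_const fst_lim]] tendsto_mult[OF tendsto_const tau_lim]]
      S0 K_pos by simp
  have den_lim: "((\<lambda>y. sig * sqrt (?tau y)) \<longlongrightarrow> 0) ?F"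
    using tendsto_mult[OF tendsto_const sqrt_lim] by simp
  have den_pos: "eventually (\<lambda>y. 0 < sig * sqrt (?tau y)) ?F"
    using ev by eventually_elim (use sig_pos in simp)
  have t1: "((\<lambda>y. (K * exp (- r * ?tau y) - fst y * exp (- dl * ?tau y)) * Phi (A (fst y) (?tau y))) \<longlongrightarrow> max (K - S0) 0) ?F"
  proof (cases "S0 < K")
    case True
    then have "0 < ln (K / S0)" using S0 by simp
    then have "LIM y ?F. (ln (K / fst y) - c1 * ?tau y) / (sig * sqrt (?tau y)) :> at_top"
      by (rule LIM_at_top_divide[OF num_lim _ den_lim den_pos])
    then have "filterlim (\<lambda>y. A (fst y) (?tau y)) at_top ?F" unfolding A_def .
    then have "((\<lambda>y. Phi (A (fst y) (?tau y))) \<longlongrightarrow> 1) ?F"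
      by (rule filterlim_compose[OF Phi_top])
    from tendsto_mult[OF coef this] show ?thesis using True by simp
  next
    case False
    show ?thesis
    proof (cases "S0 = K")
      case True
      show ?thesis
      proof (rule Lim_null_comparison[of _ "\<lambda>y. \<bar>K * exp (- r * ?tau y) - fst y * exp (- dl * ?tau y)\<bar>", THEN tendsto_cong_limit])
        show "eventually (\<lambda>y. norm ((K * exp (- r * ?tau y) - fst y * exp (- dl * ?tau y)) * Phi (A (fst y) (?tau y)))
              \<le> \<bar>K * exp (- r * ?tau y) - fst y * exp (- dl * ?tau y)\<bar>) ?F"
          by (intro always_eventually allI) (simp add: abs_mult Phi_nonneg Phi_le1 mult_left_le)
        show "((\<lambda>y. \<bar>K * exp (- r * ?tau y) - fst y * exp (- dl * ?tau y)\<bar>) \<longlongrightarrow> 0) ?F"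
          using tendsto_rabs[OF coef] True by simp
        show "max (K - S0) 0 = 0" using True by simp
      qed
    next
      case False2: False
      with False have "K < S0" by simp
      then have "0 < - ln (K / S0)" using S0 K_pos by simp
      moreover have "((\<lambda>y. - (ln (K / fst y) - c1 * ?tau y)) \<longlongrightarrow> - ln (K / S0)) ?F"
        by (rule tendsto_minus[OF num_lim])
      ultimately have "LIM y ?F. - (ln (K / fst y) - c1 * ?tau y) / (sig * sqrt (?tau y)) :> at_top"
        using LIM_at_top_divide[OF _ _ den_lim den_pos] by blast
      then have "LIM y ?F. - A (fst y) (?tau y) :> at_top" unfolding A_def minus_divide_left .
      then have "filterlim (\<lambda>y. A (fst y) (?tau y)) at_bot ?F"
        unfolding filterlim_uminus_at_bot .
      then have "((\<lambda>y. Phi (A (fst y) (?tau y))) \<longlongrightarrow> 0) ?F"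
        by (rule filterlim_compose[OF Phi_bot])
      from tendsto_mult[OF coef this] show ?thesis using \<open>K < S0\<close> by simp
    qed
  qed
  have "((\<lambda>y. vf y) \<longlongrightarrow> max (K - S0) 0 + 0) ?F"
    unfolding vf_split by (rule tendsto_add[OF t1 t2])
  then show ?thesis by simp
qed

lemma vc_cont: "continuous_on (dom_closed T) vc"
proof -
  have "continuous (at x within dom_closed T) vc" if x: "x \<in> dom_closed T" for x
  proof (cases "snd (snd x) < T")
    case True
    then show ?thesis using x by (intro vc_cont_lt) (auto simp: dom_closed_def)
  next
    case False
    then obtain S0 H0 where xe: "x = (S0, H0, T)" "0 < S0" using x by (auto simp: dom_closed_def)
    let ?D1 = "{y::real\<times>real\<times>real. 0 < fst y \<and> snd (snd y) < T}"
    let ?D2 = "{y::real\<times>real\<times>real. snd (snd y) = T}"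
    have sub: "dom_closed T \<subseteq> ?D1 \<union> ?D2" by (auto simp: dom_closed_def)
    have l1: "(vc \<longlongrightarrow> max (K - S0) 0) (at x within ?D1)"
    proof -
      have "eventually (\<lambda>y. vf y = vc y) (at x within ?D1)"
        by (simp add: eventually_at_filter vc_def)
      moreover have "(vf \<longlongrightarrow> max (K - S0) 0) (at x within ?D1)"
        using vf_lim_T[OF xe(2), of H0] xe(1) by simp
      ultimately show ?thesis using Lim_transform_eventually by blast
    qed
    have l2: "(vc \<longlongrightarrow> max (K - S0) 0) (at x within ?D2)"
    proof -
      have "((\<lambda>y. max (K - fst y) 0) \<longlongrightarrow> max (K - fst x) 0) (at x within ?D2)"
        by (intro tendsto_intros)
      moreover have "eventually (\<lambda>y. max (K - fst y) 0 = vc y) (at x within ?D2)"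
        by (simp add: eventually_at_filter vc_def)
      ultimately have "(vc \<longlongrightarrow> max (K - fst x) 0) (at x within ?D2)"
        by (rule Lim_transform_eventually)
      then show ?thesis using xe(1) by simp
    qed
    have "(vc \<longlongrightarrow> max (K - S0) 0) (at x within (?D1 \<union> ?D2))"
      using l1 l2 by (simp add: Lim_within_Un)
    then have "(vc \<longlongrightarrow> max (K - S0) 0) (at x within dom_closed T)"
      by (rule tendsto_within_subset[OF _ sub])
    moreover have "vc x = max (K - S0) 0" using xe by (simp add: vc_def)
    ultimately show ?thesis unfolding continuous_within by simp
  qed
  then show ?thesis by (simp add: continuous_on_eq_continuous_within)
qed

lemma vc_eq: "snd (snd x) < T \<Longrightarrow> vc x = vf x"
  by (simp add: vc_def)

lemma vc_T: "vc (S, H, T) = max (K - S) 0"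
  by (simp add: vc_def)

lemma vc_upper:
  assumes r: "0 \<le> r" and x: "x \<in> dom_closed T"
  shows "vc x \<le> K"
proof (cases "snd (snd x) < T")
  case True
  obtain S H t where xe: "x = (S,H,t)" "0 < S" "0 \<le> t" using x by (cases x) (auto simp: dom_closed_def)
  have "exp (- r * (T - t)) \<le> 1" using r True xe by (simp add: mult_nonneg_nonneg)
  then have "K * exp (- r * (T - t)) * Phi (A S (T - t)) \<le> K * 1 * 1"
    using K_pos Phi_le1 Phi_nonneg by (intro mult_mono) auto
  moreover have "0 \<le> S * exp (- dl * (T - t)) * Phi (B S (T - t))"
    using xe Phi_nonneg by simp
  ultimately show ?thesis using True xe by (simp add: vc_def vf_def)
next
  case False
  then show ?thesis using K_pos x by (auto simp: vc_def dom_closed_def)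
qed

lemma vc_lower:
  assumes x: "x \<in> dom_closed T"
  shows "- vc x \<le> fst x * exp (\<bar>dl\<bar> * T)"
proof (cases "snd (snd x) < T")
  case True
  obtain S H t where xe: "x = (S,H,t)" "0 < S" "0 \<le> t" using x by (cases x) (auto simp: dom_closed_def)
  have "- dl * (T - t) \<le> \<bar>dl\<bar> * T"
  proof -
    have "- dl * (T - t) \<le> \<bar>dl\<bar> * (T - t)" using True xe by (intro mult_right_mono) auto
    also have "\<dots> \<le> \<bar>dl\<bar> * T" using xe by (intro mult_left_mono) auto
    finally show ?thesis .
  qed
  then have "S * exp (- dl * (T - t)) * Phi (B S (T - t)) \<le> S * exp (\<bar>dl\<bar> * T) * 1"
    using xe Phi_le1 Phi_nonneg by (intro mult_mono) auto
  moreover have "0 \<le> K * exp (- r * (T - t)) * Phi (A S (T - t))"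
    using K_pos Phi_nonneg by simp
  ultimately have "S * exp (- dl * (T - t)) * Phi (B S (T - t)) - K * exp (- r * (T - t)) * Phi (A S (T - t)) \<le> S * exp (\<bar>dl\<bar> * T)"
    by linarith
  then show ?thesis using True xe by (simp add: vc_def vf_def)
next
  case False
  have "0 \<le> fst x * exp (\<bar>dl\<bar> * T)" using x by (auto simp: dom_closed_def)
  moreover have "0 \<le> vc x" using False by (simp add: vc_def)
  ultimately show ?thesis by linarith
qed

end


definition gg :: "real\<times>real\<times>real \<Rightarrow> real" where
  "gg = (\<lambda>x. (fst x)\<^sup>2 + 1 / (fst x)\<^sup>2 + (fst (snd x))\<^sup>2 + 1 / (fst (snd x))\<^sup>2)"

definition pen :: "real \<Rightarrow> real \<Rightarrow> real \<Rightarrow> real \<Rightarrow> real\<times>real\<times>real \<Rightarrow> real" where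
  "pen T lam eps eta = (\<lambda>x. eps * exp (lam * (T - snd (snd x))) * gg x + eta / snd (snd x))"
definition penS :: "real \<Rightarrow> real \<Rightarrow> real \<Rightarrow> real\<times>real\<times>real \<Rightarrow> real" where
  "penS T lam eps = (\<lambda>x. eps * exp (lam * (T - snd (snd x))) * (2 * fst x - 2 / (fst x) ^ 3))"
definition penH :: "real \<Rightarrow> real \<Rightarrow> real \<Rightarrow> real\<times>real\<times>real \<Rightarrow> real" where
  "penH T lam eps = (\<lambda>x. eps * exp (lam * (T - snd (snd x))) * (2 * fst (snd x) - 2 / (fst (snd x)) ^ 3))"
definition pent :: "real \<Rightarrow> real \<Rightarrow> real \<Rightarrow> real \<Rightarrow> real\<times>real\<times>real \<Rightarrow> real" where
  "pent T lam eps eta = (\<lambda>x. - lam * (eps * exp (lam * (T - snd (snd x))) * gg x) - eta / (snd (snd x))\<^sup>2)"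
definition penSS :: "real \<Rightarrow> real \<Rightarrow> real \<Rightarrow> real\<times>real\<times>real \<Rightarrow> real" where
  "penSS T lam eps = (\<lambda>x. eps * exp (lam * (T - snd (snd x))) * (2 + 6 / (fst x) ^ 4))"
definition penHH :: "real \<Rightarrow> real \<Rightarrow> real \<Rightarrow> real\<times>real\<times>real \<Rightarrow> real" where
  "penHH T lam eps = (\<lambda>x. eps * exp (lam * (T - snd (snd x))) * (2 + 6 / (fst (snd x)) ^ 4))"
definition penSt :: "real \<Rightarrow> real \<Rightarrow> real \<Rightarrow> real\<times>real\<times>real \<Rightarrow> real" where
  "penSt T lam eps = (\<lambda>x. - lam * (eps * exp (lam * (T - snd (snd x))) * (2 * fst x - 2 / (fst x) ^ 3)))"
definition penHt :: "real \<Rightarrow> real \<Rightarrow> real \<Rightarrow> real\<times>real\<times>real \<Rightarrow> real" where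
  "penHt T lam eps = (\<lambda>x. - lam * (eps * exp (lam * (T - snd (snd x))) * (2 * fst (snd x) - 2 / (fst (snd x)) ^ 3)))"

lemma pen_deriv:
  assumes "0 < S" "0 < H" "0 < t"
  shows "(pen T lam eps eta has_derivative (\<lambda>(dS, dH, dt). penS T lam eps (S,H,t) * dS + penH T lam eps (S,H,t) * dH + pent T lam eps eta (S,H,t) * dt)) (at (S,H,t))"
  unfolding pen_def gg_def
  apply (rule has_derivative_eq_rhs)
   apply (rule derivative_eq_intros | use assms in simp)+
  apply (rule ext)
  apply clarsimp
  using assms
  apply (simp add: penS_def penH_def pent_def gg_def field_simps power2_eq_square power3_eq_cube)
  done


lemma d1: "z \<noteq> 0 \<Longrightarrow> ((\<lambda>z::real. 2*z - 2/z^3) has_real_derivative (2 + 6/z^4)) (at z)"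
  by (auto intro!: derivative_eq_intros simp: field_simps power4_eq_xxxx power3_eq_cube power2_eq_square)

lemma dexp: "((\<lambda>y::real\<times>real\<times>real. exp (c * (T - snd (snd y)))) has_derivative
   (\<lambda>h. c * (0 - snd (snd h)) * exp (c * (T - snd (snd x))))) (at x)"
  by (rule DERIV_compose_FDERIV[OF DERIV_exp has_derivative_mult_right[OF has_derivative_diff[OF has_derivative_const has_derivative_snd[OF has_derivative_snd[OF has_derivative_ident]]]]])

lemma penS_deriv:
  assumes "0 < S" "0 < H" "0 < t"
  shows "(penS T lam eps has_derivative (\<lambda>(dS, dH, dt). penSS T lam eps (S,H,t) * dS + 0 * dH + penSt T lam eps (S,H,t) * dt)) (at (S,H,t))"
  unfolding penS_def
  apply (rule has_derivative_eq_rhs[OF has_derivative_mult[OF has_derivative_mult_right[OF dexp]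
           DERIV_compose_FDERIV[OF d1[of "fst (S,H,t)"] has_derivative_fst[OF has_derivative_ident]]]])
  using assms apply simp
  apply (rule ext)
  apply clarsimp
  apply (simp add: penSS_def penSt_def algebra_simps)
  done

lemma penH_deriv:
  assumes "0 < S" "0 < H" "0 < t"
  shows "(penH T lam eps has_derivative (\<lambda>(dS, dH, dt). 0 * dS + penHH T lam eps (S,H,t) * dH + penHt T lam eps (S,H,t) * dt)) (at (S,H,t))"
  unfolding penH_def
  apply (rule has_derivative_eq_rhs[OF has_derivative_mult[OF has_derivative_mult_right[OF dexp]
           DERIV_compose_FDERIV[OF d1[of "fst (snd (S,H,t))"] has_derivative_fst[OF has_derivative_snd[OF has_derivative_ident]]]]])
  using assms apply simp
  apply (rule ext)
  apply clarsimp
  apply (simp add: penHH_def penHt_def algebra_simps)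
  done

lemma C2_pen: "C2_test (dom_open T) (pen T lam eps eta) (pent T lam eps eta) (penS T lam eps) (penH T lam eps)
   (penSS T lam eps) (\<lambda>_. 0) (penHH T lam eps)"
proof -
  have 1: "\<forall>x\<in>dom_open T. (pen T lam eps eta has_derivative (\<lambda>(dS, dH, dt). penS T lam eps x * dS + penH T lam eps x * dH + pent T lam eps eta x * dt)) (at x)"
    using pen_deriv by (auto simp: dom_open_def)
  have 2: "\<forall>x\<in>dom_open T. (penS T lam eps has_derivative (\<lambda>(dS, dH, dt). penSS T lam eps x * dS + 0 * dH + penSt T lam eps x * dt)) (at x)"
    using penS_deriv by (auto simp: dom_open_def)
  have 3: "\<forall>x\<in>dom_open T. (penH T lam eps has_derivative (\<lambda>(dS, dH, dt). 0 * dS + penHH T lam eps x * dH + penHt T lam eps x * dt)) (at x)"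
    using penH_deriv by (auto simp: dom_open_def)
  define U where "U = {x::real\<times>real\<times>real. 0 < fst x \<and> 0 < fst (snd x) \<and> 0 < snd (snd x)}"
  have U: "dom_open T \<subseteq> U" by (auto simp: dom_open_def U_def)
  have c1: "continuous_on (dom_open T) (pent T lam eps eta)"
  proof (rule continuous_on_subset[OF _ U])
    show "continuous_on U (pent T lam eps eta)"
      unfolding pent_def gg_def by (intro continuous_intros) (auto simp: U_def)
  qed
  have c2: "continuous_on (dom_open T) (penSS T lam eps)"
  proof (rule continuous_on_subset[OF _ U])
    show "continuous_on U (penSS T lam eps)"
      unfolding penSS_def by (intro continuous_intros) (auto simp: U_def)
  qed
  have c3: "continuous_on (dom_open T) (penHH T lam eps)"
  proof (rule continuous_on_subset[OF _ U])
    show "continuous_on U (penHH T lam eps)"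
      unfolding penHH_def by (intro continuous_intros) (auto simp: U_def)
  qed
  have c4: "continuous_on (dom_open T) (penSt T lam eps)"
  proof (rule continuous_on_subset[OF _ U])
    show "continuous_on U (penSt T lam eps)"
      unfolding penSt_def by (intro continuous_intros) (auto simp: U_def)
  qed
  have c5: "continuous_on (dom_open T) (penHt T lam eps)"
  proof (rule continuous_on_subset[OF _ U])
    show "continuous_on U (penHt T lam eps)"
      unfolding penHt_def by (intro continuous_intros) (auto simp: U_def)
  qed
  show ?thesis
    unfolding C2_test_def
    apply (rule exI[of _ "penSt T lam eps"], rule exI[of _ "penHt T lam eps"])
    using 1 2 3 c1 c2 c3 c4 c5 by (simp add: continuous_on_const)
qed

lemma C2_add:
  assumes f: "C2_test D f ft fS fH fSS fSH fHH" and g: "C2_test D g gt gS gH gSS gSH gHH"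
  shows "C2_test D (\<lambda>x. f x + g x) (\<lambda>x. ft x + gt x) (\<lambda>x. fS x + gS x) (\<lambda>x. fH x + gH x)
     (\<lambda>x. fSS x + gSS x) (\<lambda>x. fSH x + gSH x) (\<lambda>x. fHH x + gHH x)"
proof -
  obtain fSt fHt where F:
    "\<forall>x\<in>D. (f has_derivative (\<lambda>(dS, dH, dt). fS x * dS + fH x * dH + ft x * dt)) (at x)"
    "\<forall>x\<in>D. (fS has_derivative (\<lambda>(dS, dH, dt). fSS x * dS + fSH x * dH + fSt x * dt)) (at x)"
    "\<forall>x\<in>D. (fH has_derivative (\<lambda>(dS, dH, dt). fSH x * dS + fHH x * dH + fHt x * dt)) (at x)"
    "continuous_on D ft" "continuous_on D fSS" "continuous_on D fSH" "continuous_on D fHH"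
    "continuous_on D fSt" "continuous_on D fHt"
    using f unfolding C2_test_def by blast
  obtain gSt gHt where G:
    "\<forall>x\<in>D. (g has_derivative (\<lambda>(dS, dH, dt). gS x * dS + gH x * dH + gt x * dt)) (at x)"
    "\<forall>x\<in>D. (gS has_derivative (\<lambda>(dS, dH, dt). gSS x * dS + gSH x * dH + gSt x * dt)) (at x)"
    "\<forall>x\<in>D. (gH has_derivative (\<lambda>(dS, dH, dt). gSH x * dS + gHH x * dH + gHt x * dt)) (at x)"
    "continuous_on D gt" "continuous_on D gSS" "continuous_on D gSH" "continuous_on D gHH"
    "continuous_on D gSt" "continuous_on D gHt"
    using g unfolding C2_test_def by blast
  have 1: "\<forall>x\<in>D. ((\<lambda>x. f x + g x) has_derivative (\<lambda>(dS, dH, dt). (fS x + gS x) * dS + (fH x + gH x) * dH + (ft x + gt x) * dt)) (at x)"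
  proof
    fix x assume x: "x \<in> D"
    show "((\<lambda>x. f x + g x) has_derivative (\<lambda>(dS, dH, dt). (fS x + gS x) * dS + (fH x + gH x) * dH + (ft x + gt x) * dt)) (at x)"
      by (rule has_derivative_eq_rhs[OF has_derivative_add[OF F(1)[rule_format, OF x] G(1)[rule_format, OF x]]])
         (auto simp: algebra_simps)
  qed
  have 2: "\<forall>x\<in>D. ((\<lambda>x. fS x + gS x) has_derivative (\<lambda>(dS, dH, dt). (fSS x + gSS x) * dS + (fSH x + gSH x) * dH + (fSt x + gSt x) * dt)) (at x)"
  proof
    fix x assume x: "x \<in> D"
    show "((\<lambda>x. fS x + gS x) has_derivative (\<lambda>(dS, dH, dt). (fSS x + gSS x) * dS + (fSH x + gSH x) * dH + (fSt x + gSt x) * dt)) (at x)"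
      by (rule has_derivative_eq_rhs[OF has_derivative_add[OF F(2)[rule_format, OF x] G(2)[rule_format, OF x]]])
         (auto simp: algebra_simps)
  qed
  have 3: "\<forall>x\<in>D. ((\<lambda>x. fH x + gH x) has_derivative (\<lambda>(dS, dH, dt). (fSH x + gSH x) * dS + (fHH x + gHH x) * dH + (fHt x + gHt x) * dt)) (at x)"
  proof
    fix x assume x: "x \<in> D"
    show "((\<lambda>x. fH x + gH x) has_derivative (\<lambda>(dS, dH, dt). (fSH x + gSH x) * dS + (fHH x + gHH x) * dH + (fHt x + gHt x) * dt)) (at x)"
      by (rule has_derivative_eq_rhs[OF has_derivative_add[OF F(3)[rule_format, OF x] G(3)[rule_format, OF x]]])
         (auto simp: algebra_simps)
  qed
  show ?thesis
    unfolding C2_test_def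
    apply (rule exI[of _ "\<lambda>x. fSt x + gSt x"], rule exI[of _ "\<lambda>x. fHt x + gHt x"])
    using 1 2 3 F G by (simp add: continuous_on_add)
qed

lemma C2_neg:
  assumes f: "C2_test D f ft fS fH fSS fSH fHH"
  shows "C2_test D (\<lambda>x. - f x) (\<lambda>x. - ft x) (\<lambda>x. - fS x) (\<lambda>x. - fH x)
     (\<lambda>x. - fSS x) (\<lambda>x. - fSH x) (\<lambda>x. - fHH x)"
proof -
  obtain fSt fHt where F:
    "\<forall>x\<in>D. (f has_derivative (\<lambda>(dS, dH, dt). fS x * dS + fH x * dH + ft x * dt)) (at x)"
    "\<forall>x\<in>D. (fS has_derivative (\<lambda>(dS, dH, dt). fSS x * dS + fSH x * dH + fSt x * dt)) (at x)"
    "\<forall>x\<in>D. (fH has_derivative (\<lambda>(dS, dH, dt). fSH x * dS + fHH x * dH + fHt x * dt)) (at x)"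
    "continuous_on D ft" "continuous_on D fSS" "continuous_on D fSH" "continuous_on D fHH"
    "continuous_on D fSt" "continuous_on D fHt"
    using f unfolding C2_test_def by blast
  have 1: "\<forall>x\<in>D. ((\<lambda>x. - f x) has_derivative (\<lambda>(dS, dH, dt). (- fS x) * dS + (- fH x) * dH + (- ft x) * dt)) (at x)"
  proof
    fix x assume x: "x \<in> D"
    show "((\<lambda>x. - f x) has_derivative (\<lambda>(dS, dH, dt). (- fS x) * dS + (- fH x) * dH + (- ft x) * dt)) (at x)"
      by (rule has_derivative_eq_rhs[OF has_derivative_minus[OF F(1)[rule_format, OF x]]])
         (auto simp: algebra_simps)
  qed
  have 2: "\<forall>x\<in>D. ((\<lambda>x. - fS x) has_derivative (\<lambda>(dS, dH, dt). (- fSS x) * dS + (- fSH x) * dH + (- fSt x) * dt)) (at x)"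
  proof
    fix x assume x: "x \<in> D"
    show "((\<lambda>x. - fS x) has_derivative (\<lambda>(dS, dH, dt). (- fSS x) * dS + (- fSH x) * dH + (- fSt x) * dt)) (at x)"
      by (rule has_derivative_eq_rhs[OF has_derivative_minus[OF F(2)[rule_format, OF x]]])
         (auto simp: algebra_simps)
  qed
  have 3: "\<forall>x\<in>D. ((\<lambda>x. - fH x) has_derivative (\<lambda>(dS, dH, dt). (- fSH x) * dS + (- fHH x) * dH + (- fHt x) * dt)) (at x)"
  proof
    fix x assume x: "x \<in> D"
    show "((\<lambda>x. - fH x) has_derivative (\<lambda>(dS, dH, dt). (- fSH x) * dS + (- fHH x) * dH + (- fHt x) * dt)) (at x)"
      by (rule has_derivative_eq_rhs[OF has_derivative_minus[OF F(3)[rule_format, OF x]]])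
         (auto simp: algebra_simps)
  qed
  show ?thesis
    unfolding C2_test_def
    apply (rule exI[of _ "\<lambda>x. - fSt x"], rule exI[of _ "\<lambda>x. - fHt x"])
    using 1 2 3 F by (simp add: continuous_on_minus)
qed

lemma pde_op_alt:
  assumes "m = mu - (a - r) * rho * sig / b" "c = alpha * sqrt (1 - rho\<^sup>2) * sig"
  shows "pde_op mu sig a b r rho alpha S H u pt pS pH pSS pSH pHH
    = pt + m * S * pS + r * H * pH + 1/2 * sig\<^sup>2 * S\<^sup>2 * pSS + rho * sig * b * S * H * pSH
        + 1/2 * b\<^sup>2 * H\<^sup>2 * pHH - r * u + c * S * \<bar>pS\<bar>"
  unfolding pde_op_def Let_def assms by simp

lemma pde_split_gen:
  fixes m c :: real
  shows "(pt1 + pt2) + m * S * (pS1 + pS2) + r * H * (pH1 + pH2) + 1/2 * sig\<^sup>2 * S\<^sup>2 * (pSS1 + pSS2)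
        + rho * sig * b * S * H * (pSH1 + pSH2) + 1/2 * b\<^sup>2 * H\<^sup>2 * (pHH1 + pHH2) - r * u + c * S * \<bar>pS1 + pS2\<bar>
   = (pt1 + m * S * pS1 + r * H * pH1 + 1/2 * sig\<^sup>2 * S\<^sup>2 * pSS1 + rho * sig * b * S * H * pSH1
        + 1/2 * b\<^sup>2 * H\<^sup>2 * pHH1 - r * u1 + c * S * \<bar>pS1\<bar>)
     + (pt2 + m * S * pS2 + r * H * pH2 + 1/2 * sig\<^sup>2 * S\<^sup>2 * pSS2
        + rho * sig * b * S * H * pSH2 + 1/2 * b\<^sup>2 * H\<^sup>2 * pHH2)
     - r * (u - u1) + c * S * (\<bar>pS1 + pS2\<bar> - \<bar>pS1\<bar>)"
  by (simp add: field_simps)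

lemma pde_split:
  "pde_op mu sig a b r rho alpha S H u (pt1 + pt2) (pS1 + pS2) (pH1 + pH2) (pSS1 + pSS2) (pSH1 + pSH2) (pHH1 + pHH2)
   = pde_op mu sig a b r rho alpha S H u1 pt1 pS1 pH1 pSS1 pSH1 pHH1
     + (pt2 + (mu - (a - r) * rho * sig / b) * S * pS2 + r * H * pH2 + 1/2 * sig\<^sup>2 * S\<^sup>2 * pSS2
        + rho * sig * b * S * H * pSH2 + 1/2 * b\<^sup>2 * H\<^sup>2 * pHH2)
     - r * (u - u1) + alpha * sqrt (1 - rho\<^sup>2) * sig * S * (\<bar>pS1 + pS2\<bar> - \<bar>pS1\<bar>)"
  unfolding pde_op_alt[OF refl refl] by (rule pde_split_gen)

lemma pen_bound:
  fixes mut t :: real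
  assumes S: "0 < S" and H: "0 < H" and sig: "0 < sig" and rho: "-1 \<le> rho" "rho \<le> 1" and eps: "0 \<le> eps"
  defines "x \<equiv> (S, H, t)"
  shows "\<bar>mut * S * penS T lam eps x\<bar> + \<bar>r * H * penH T lam eps x\<bar> + \<bar>1/2 * sig\<^sup>2 * S\<^sup>2 * penSS T lam eps x\<bar>
     + \<bar>1/2 * b\<^sup>2 * H\<^sup>2 * penHH T lam eps x\<bar> + \<bar>alpha * sqrt (1 - rho\<^sup>2) * sig * S * penS T lam eps x\<bar>
     \<le> (2 * \<bar>mut\<bar> + 2 * \<bar>r\<bar> + 3 * sig\<^sup>2 + 3 * b\<^sup>2 + 2 * \<bar>alpha\<bar> * sig) * (eps * exp (lam * (T - t)) * gg x)"
proof -
  define e where "e = eps * exp (lam * (T - t))"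
  define iS where "iS = 1 / S\<^sup>2"
  define iH where "iH = 1 / H\<^sup>2"
  define G where "G = gg x"
  have e0: "0 \<le> e" using eps by (simp add: e_def)
  have G: "G = S\<^sup>2 + iS + H\<^sup>2 + iH" by (simp add: G_def gg_def x_def iS_def iH_def)
  have nn: "0 \<le> S\<^sup>2" "0 \<le> iS" "0 \<le> H\<^sup>2" "0 \<le> iH" by (auto simp: iS_def iH_def)
  have q1: "S * (2 * S - 2 / S ^ 3) = 2 * S\<^sup>2 - 2 * iS"
    using S by (simp add: iS_def field_simps power2_eq_square power3_eq_cube)
  have q2: "H * (2 * H - 2 / H ^ 3) = 2 * H\<^sup>2 - 2 * iH"
    using H by (simp add: iH_def field_simps power2_eq_square power3_eq_cube)
  have q3: "S\<^sup>2 * (2 + 6 / S ^ 4) = 2 * S\<^sup>2 + 6 * iS"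
    using S by (simp add: iS_def field_simps power2_eq_square power4_eq_xxxx)
  have q4: "H\<^sup>2 * (2 + 6 / H ^ 4) = 2 * H\<^sup>2 + 6 * iH"
    using H by (simp add: iH_def field_simps power2_eq_square power4_eq_xxxx)
  have pS: "S * penS T lam eps x = e * (2 * S\<^sup>2 - 2 * iS)"
    unfolding q1[symmetric] by (simp add: penS_def x_def e_def)
  have pH: "H * penH T lam eps x = e * (2 * H\<^sup>2 - 2 * iH)"
    unfolding q2[symmetric] by (simp add: penH_def x_def e_def)
  have pSS: "S\<^sup>2 * penSS T lam eps x = e * (2 * S\<^sup>2 + 6 * iS)"
    unfolding q3[symmetric] by (simp add: penSS_def x_def e_def)
  have pHH: "H\<^sup>2 * penHH T lam eps x = e * (2 * H\<^sup>2 + 6 * iH)"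
    unfolding q4[symmetric] by (simp add: penHH_def x_def e_def)
  have b1: "\<bar>2 * S\<^sup>2 - 2 * iS\<bar> \<le> 2 * G" unfolding abs_le_iff G using nn by simp
  have b2: "\<bar>2 * H\<^sup>2 - 2 * iH\<bar> \<le> 2 * G" unfolding abs_le_iff G using nn by simp
  have b3: "\<bar>2 * S\<^sup>2 + 6 * iS\<bar> \<le> 6 * G" unfolding abs_le_iff G using nn by simp
  have b4: "\<bar>2 * H\<^sup>2 + 6 * iH\<bar> \<le> 6 * G" unfolding abs_le_iff G using nn by simp
  have aS: "\<bar>S * penS T lam eps x\<bar> \<le> 2 * (e * G)"
    unfolding pS abs_mult using mult_left_mono[OF b1 e0] e0 by simp
  have aH: "\<bar>H * penH T lam eps x\<bar> \<le> 2 * (e * G)"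
    unfolding pH abs_mult using mult_left_mono[OF b2 e0] e0 by simp
  have aSS: "\<bar>S\<^sup>2 * penSS T lam eps x\<bar> \<le> 6 * (e * G)"
    unfolding pSS abs_mult using mult_left_mono[OF b3 e0] e0 by simp
  have aHH: "\<bar>H\<^sup>2 * penHH T lam eps x\<bar> \<le> 6 * (e * G)"
    unfolding pHH abs_mult using mult_left_mono[OF b4 e0] e0 by simp
  have "\<bar>rho\<bar> \<le> 1" using rho by simp
  then have "rho\<^sup>2 \<le> 1" by (simp add: abs_square_le_1)
  then have sq: "\<bar>sqrt (1 - rho\<^sup>2)\<bar> \<le> 1" by simp
  have g1: "\<bar>mut * S * penS T lam eps x\<bar> \<le> \<bar>mut\<bar> * (2 * (e * G))"
    using mult_left_mono[OF aS, of "\<bar>mut\<bar>"] by (simp add: abs_mult mult.assoc)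
  have g2: "\<bar>r * H * penH T lam eps x\<bar> \<le> \<bar>r\<bar> * (2 * (e * G))"
    using mult_left_mono[OF aH, of "\<bar>r\<bar>"] by (simp add: abs_mult mult.assoc)
  have g3: "\<bar>1/2 * sig\<^sup>2 * S\<^sup>2 * penSS T lam eps x\<bar> \<le> 1/2 * sig\<^sup>2 * (6 * (e * G))"
    using mult_left_mono[OF aSS, of "1/2 * sig\<^sup>2"] by (simp add: abs_mult mult.assoc)
  have g4: "\<bar>1/2 * b\<^sup>2 * H\<^sup>2 * penHH T lam eps x\<bar> \<le> 1/2 * b\<^sup>2 * (6 * (e * G))"
    using mult_left_mono[OF aHH, of "1/2 * b\<^sup>2"] by (simp add: abs_mult mult.assoc)
  have g5: "\<bar>alpha * sqrt (1 - rho\<^sup>2) * sig * S * penS T lam eps x\<bar> \<le> \<bar>alpha\<bar> * sig * (2 * (e * G))"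
  proof -
    have s1: "\<bar>alpha\<bar> * \<bar>sqrt (1 - rho\<^sup>2)\<bar> \<le> \<bar>alpha\<bar>"
      using mult_left_mono[OF sq, of "\<bar>alpha\<bar>"] by simp
    have s2: "\<bar>alpha * sqrt (1 - rho\<^sup>2) * sig\<bar> \<le> \<bar>alpha\<bar> * sig"
      using mult_right_mono[OF s1, of sig] sig by (simp add: abs_mult)
    have s3: "\<bar>alpha * sqrt (1 - rho\<^sup>2) * sig\<bar> * \<bar>S * penS T lam eps x\<bar> \<le> (\<bar>alpha\<bar> * sig) * (2 * (e * G))"
      by (rule mult_mono[OF s2 aS]) (use sig in auto)
    have s4: "\<bar>alpha * sqrt (1 - rho\<^sup>2) * sig * S * penS T lam eps x\<bar> = \<bar>alpha * sqrt (1 - rho\<^sup>2) * sig\<bar> * \<bar>S * penS T lam eps x\<bar>"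
      by (simp add: abs_mult)
    show ?thesis using s3 s4 by simp
  qed
  have sum: "\<bar>mut * S * penS T lam eps x\<bar> + \<bar>r * H * penH T lam eps x\<bar> + \<bar>1/2 * sig\<^sup>2 * S\<^sup>2 * penSS T lam eps x\<bar>
     + \<bar>1/2 * b\<^sup>2 * H\<^sup>2 * penHH T lam eps x\<bar> + \<bar>alpha * sqrt (1 - rho\<^sup>2) * sig * S * penS T lam eps x\<bar>
     \<le> \<bar>mut\<bar> * (2 * (e * G)) + \<bar>r\<bar> * (2 * (e * G)) + 1/2 * sig\<^sup>2 * (6 * (e * G)) + 1/2 * b\<^sup>2 * (6 * (e * G))
       + \<bar>alpha\<bar> * sig * (2 * (e * G))"
    by (intro add_mono g1 g2 g3 g4 g5)
  have eq: "(2 * \<bar>mut\<bar> + 2 * \<bar>r\<bar> + 3 * sig\<^sup>2 + 3 * b\<^sup>2 + 2 * \<bar>alpha\<bar> * sig) * (e * G)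
     = \<bar>mut\<bar> * (2 * (e * G)) + \<bar>r\<bar> * (2 * (e * G)) + 1/2 * sig\<^sup>2 * (6 * (e * G)) + 1/2 * b\<^sup>2 * (6 * (e * G))
       + \<bar>alpha\<bar> * sig * (2 * (e * G))"
    by (simp add: algebra_simps)
  have fin: "\<bar>mut * S * penS T lam eps x\<bar> + \<bar>r * H * penH T lam eps x\<bar> + \<bar>1/2 * sig\<^sup>2 * S\<^sup>2 * penSS T lam eps x\<bar>
     + \<bar>1/2 * b\<^sup>2 * H\<^sup>2 * penHH T lam eps x\<bar> + \<bar>alpha * sqrt (1 - rho\<^sup>2) * sig * S * penS T lam eps x\<bar>
     \<le> (2 * \<bar>mut\<bar> + 2 * \<bar>r\<bar> + 3 * sig\<^sup>2 + 3 * b\<^sup>2 + 2 * \<bar>alpha\<bar> * sig) * (e * G)"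
    by (rule order_trans[OF sum eq_refl[OF eq[symmetric]]])
  have e3: "eps * exp (lam * (T - t)) * gg x = e * G" by (simp add: e_def G_def)
  show ?thesis by (subst e3) (rule fin)
qed


lemma gg_pos: "0 < fst x \<Longrightarrow> 0 < gg x"
  unfolding gg_def by (intro add_pos_nonneg) auto

lemma max_lemma:
  fixes w :: "real\<times>real\<times>real \<Rightarrow> real" and T lam :: real
  assumes T: "0 < T" and lam: "0 \<le> lam"
    and cont: "continuous_on (dom_closed T) w"
    and wT: "\<And>S H. 0 < S \<Longrightarrow> 0 < H \<Longrightarrow> w (S,H,T) \<le> 0"
    and growth: "\<And>\<epsilon>. 0 < \<epsilon> \<Longrightarrow> \<exists>M\<ge>1. \<forall>S H t. (S,H,t) \<in> dom_closed T \<longrightarrow>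
                   (S < 1/M \<or> M < S \<or> H < 1/M \<or> M < H) \<longrightarrow> w (S,H,t) \<le> \<epsilon> * gg (S,H,t)"
    and pz: "pz \<in> dom_open T" "0 < w pz"
  shows "\<exists>\<epsilon>>0. \<exists>\<eta>>0. \<exists>q\<in>dom_open T. (\<forall>y\<in>dom_open T. w y - pen T lam \<epsilon> \<eta> y \<le> w q - pen T lam \<epsilon> \<eta> q)
            \<and> 0 < w q - pen T lam \<epsilon> \<eta> q"
proof -
  obtain S0 H0 t0 where pze: "pz = (S0,H0,t0)" "0 < S0" "0 < H0" "0 < t0" "t0 < T"
    using pz(1) by (cases pz) (auto simp: dom_open_def)
  define \<theta> where "\<theta> = w pz"
  have \<theta>: "0 < \<theta>" using pz(2) \<theta>_def by simp
  have G0: "0 < gg pz" using pze by (intro gg_pos) simp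
  define E where "E = exp (lam * T)"
  have E1: "1 \<le> E" using lam T by (simp add: E_def)
  define \<epsilon> where "\<epsilon> = \<theta> / (4 * E * gg pz)"
  have \<epsilon>: "0 < \<epsilon>" using \<theta> E1 G0 by (simp add: \<epsilon>_def)
  define \<eta> where "\<eta> = \<theta> * t0 / 4"
  have \<eta>: "0 < \<eta>" using \<theta> pze by (simp add: \<eta>_def)
  define \<Psi> where "\<Psi> = (\<lambda>y. w y - pen T lam \<epsilon> \<eta> y)"
  have pen_eq: "pen T lam \<epsilon> \<eta> (S,H,t) = \<epsilon> * exp (lam * (T - t)) * gg (S,H,t) + \<eta> / t" for S H t
    by (simp add: pen_def)
  have pen1_nn: "0 \<le> \<epsilon> * exp (lam * (T - t)) * gg (S,H,t)" if "0 < S" for S H t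
    using \<epsilon> gg_pos[of "(S,H,t)"] that by simp
  have "\<Psi> pz \<ge> \<theta> / 2"
  proof -
    have "exp (lam * (T - t0)) \<le> E"
      unfolding E_def using lam pze by (simp add: mult_left_mono)
    then have "\<epsilon> * exp (lam * (T - t0)) * gg pz \<le> \<epsilon> * E * gg pz"
      using \<epsilon> G0 by (simp add: mult_right_mono mult_left_mono)
    also have "\<epsilon> * E * gg pz = \<theta> / 4" unfolding \<epsilon>_def using E1 G0 by (simp add: field_simps)
    finally have a: "\<epsilon> * exp (lam * (T - t0)) * gg pz \<le> \<theta> / 4" .
    have b: "\<eta> / t0 = \<theta> / 4" unfolding \<eta>_def using pze by (simp add: field_simps)
    have c: "pen T lam \<epsilon> \<eta> pz = \<epsilon> * exp (lam * (T - t0)) * gg pz + \<eta> / t0"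
      unfolding pze(1) pen_eq ..
    have d: "\<Psi> pz = \<theta> - pen T lam \<epsilon> \<eta> pz" unfolding \<Psi>_def \<theta>_def ..
    show ?thesis using a b c d by linarith
  qed
  note \<Psi>pz = this
  obtain M where M: "1 \<le> M" "\<forall>S H t. (S,H,t) \<in> dom_closed T \<longrightarrow> (S < 1/M \<or> M < S \<or> H < 1/M \<or> M < H) \<longrightarrow> w (S,H,t) \<le> \<epsilon> * gg (S,H,t)"
    using growth[OF \<epsilon>] by blast
  define M' where "M' = max M (max S0 (max (1/S0) (max H0 (1/H0))))"
  have M': "M \<le> M'" "S0 \<le> M'" "1/S0 \<le> M'" "H0 \<le> M'" "1/H0 \<le> M'" unfolding M'_def by auto
  have M'pos: "0 < M'" using M(1) M'(1) by linarith
  have iM: "1/M' \<le> 1/M" using frac_le[of 1 1 M M'] M(1) M'(1) by simp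
  have S0b: "1/M' \<le> S0" using M'(3) pze(2) M'pos by (simp add: field_simps)
  have H0b: "1/M' \<le> H0" using M'(5) pze(3) M'pos by (simp add: field_simps)
  have iMpos: "0 < 1/M'" using M'pos by simp
  have Spos: "0 < z" if "1/M' \<le> z" for z using iMpos that by linarith
  have outside: "\<Psi> y < 0" if y: "y \<in> dom_open T"
     and out: "fst y < 1/M' \<or> M' < fst y \<or> fst (snd y) < 1/M' \<or> M' < fst (snd y)" for y
  proof -
    obtain S H t where ye: "y = (S,H,t)" "0 < S" "0 < H" "0 < t" "t < T"
      using y by (cases y) (auto simp: dom_open_def)
    have "S < 1/M \<or> M < S \<or> H < 1/M \<or> M < H" using out ye iM M'(1) by auto
    moreover have "(S,H,t) \<in> dom_closed T" using ye by (simp add: dom_closed_def)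
    ultimately have w1: "w y \<le> \<epsilon> * gg y" using M(2) ye(1) by blast
    have "1 \<le> exp (lam * (T - t))" using lam ye by simp
    then have "\<epsilon> * gg y * 1 \<le> \<epsilon> * gg y * exp (lam * (T - t))"
      using \<epsilon> gg_pos[of y] ye by (intro mult_left_mono) auto
    moreover have "0 < \<eta> / t" using \<eta> ye by simp
    ultimately show ?thesis using w1 unfolding \<Psi>_def ye(1) pen_eq by (simp add: algebra_simps)
  qed
  define Bx where "Bx = {1/M'..M'} \<times> {1/M'..M'} \<times> {0..T}"
  have Bx_sub: "Bx \<subseteq> dom_closed T" unfolding Bx_def dom_closed_def by (auto intro: Spos)
  have "compact Bx" unfolding Bx_def by (intro compact_Times compact_Icc)
  moreover have "continuous_on Bx w" using cont Bx_sub by (rule continuous_on_subset)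
  ultimately have "compact (w ` Bx)" using compact_continuous_image by blast
  then have "bounded (w ` Bx)" by (rule compact_imp_bounded)
  then obtain Bd where Bd: "\<forall>y\<in>Bx. \<bar>w y\<bar> \<le> Bd" unfolding bounded_iff by auto
  define Bd' where "Bd' = max Bd 0 + 1"
  have Bd'pos: "0 < Bd'" unfolding Bd'_def by simp
  define t1 where "t1 = min t0 (\<eta> / Bd')"
  have t1pos: "0 < t1" unfolding t1_def using pze \<eta> Bd'pos by simp
  have small: "\<Psi> y < 0" if y: "y \<in> dom_open T" and yb: "y \<in> {1/M'..M'} \<times> {1/M'..M'} \<times> UNIV"
      and yt: "snd (snd y) < t1" for y
  proof -
    obtain S H t where ye: "y = (S,H,t)" "0 < S" "0 < H" "0 < t" "t < T"
      using y by (cases y) (auto simp: dom_open_def)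
    have "y \<in> Bx" using yb ye unfolding Bx_def by auto
    then have wy: "w y < Bd'" using Bd unfolding Bd'_def by fastforce
    have "t < \<eta> / Bd'" using yt ye unfolding t1_def by simp
    then have "t * Bd' < \<eta>" using Bd'pos by (simp add: less_divide_eq)
    then have "Bd' < \<eta> / t" using ye by (simp add: less_divide_eq mult.commute)
    moreover have "0 \<le> \<epsilon> * exp (lam * (T - t)) * gg (S,H,t)" using pen1_nn ye by blast
    ultimately show ?thesis using wy unfolding \<Psi>_def ye(1) pen_eq by simp
  qed
  define Kc where "Kc = {1/M'..M'} \<times> {1/M'..M'} \<times> {t1..T}"
  have pzK: "pz \<in> Kc" unfolding Kc_def pze(1) using S0b H0b M' pze t1_def by auto
  have Kc_sub: "Kc \<subseteq> dom_closed T" unfolding Kc_def dom_closed_def using t1pos by (auto intro: Spos)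
  have "compact Kc" unfolding Kc_def by (intro compact_Times compact_Icc)
  moreover have "Kc \<noteq> {}" using pzK by auto
  moreover have "continuous_on Kc \<Psi>"
  proof -
    have "continuous_on Kc w" using cont Kc_sub by (rule continuous_on_subset)
    moreover have "continuous_on Kc (pen T lam \<epsilon> \<eta>)"
      unfolding pen_def gg_def Kc_def
      by (intro continuous_intros) (use iMpos t1pos in auto)
    ultimately show ?thesis unfolding \<Psi>_def by (intro continuous_on_diff)
  qed
  ultimately obtain q where q: "q \<in> Kc" "\<forall>y\<in>Kc. \<Psi> y \<le> \<Psi> q"
    using continuous_attains_sup by blast
  have \<Psi>q: "\<theta> / 2 \<le> \<Psi> q" using q(2) pzK \<Psi>pz by fastforce
  obtain S H t where qe: "q = (S,H,t)" "1/M' \<le> S" "S \<le> M'" "1/M' \<le> H" "H \<le> M'" "t1 \<le> t" "t \<le> T"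
    using q(1) unfolding Kc_def by (cases q) auto
  have tT: "t < T"
  proof (rule ccontr)
    assume "\<not> t < T"
    then have tq: "t = T" using qe by simp
    have "w q \<le> 0" unfolding qe(1) tq using wT qe Spos by simp
    moreover have "0 \<le> \<epsilon> * exp (lam * (T - t)) * gg (S,H,t)" using pen1_nn qe Spos by simp
    moreover have "0 < \<eta> / t" using \<eta> tq T by simp
    ultimately have "\<Psi> q < 0" unfolding \<Psi>_def qe(1) pen_eq by simp
    then show False using \<Psi>q \<theta> by simp
  qed
  have qD: "q \<in> dom_open T" unfolding qe(1) dom_open_def using qe Spos t1pos tT by auto
  have allmax: "\<Psi> y \<le> \<Psi> q" if y: "y \<in> dom_open T" for y
  proof (cases "y \<in> Kc")
    case True then show ?thesis using q(2) by blast
  next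
    case False
    obtain Sy Hy ty where ye: "y = (Sy,Hy,ty)" "0 < ty" "ty < T"
      using y by (cases y) (auto simp: dom_open_def)
    show ?thesis
    proof (cases "y \<in> {1/M'..M'} \<times> {1/M'..M'} \<times> UNIV")
      case True
      then have "ty < t1" using False ye unfolding Kc_def by auto
      then have "\<Psi> y < 0" using small[OF y True] ye by simp
      then show ?thesis using \<Psi>q \<theta> by simp
    next
      case False2: False
      then have "fst y < 1/M' \<or> M' < fst y \<or> fst (snd y) < 1/M' \<or> M' < fst (snd y)"
        unfolding ye by auto
      then have "\<Psi> y < 0" using outside[OF y] by blast
      then show ?thesis using \<Psi>q \<theta> by simp
    qed
  qed
  show ?thesis
    using \<epsilon> \<eta> qD allmax \<Psi>q \<theta> unfolding \<Psi>_def
    by (intro exI[of _ \<epsilon>] exI[of _ \<eta>] conjI bexI[of _ q]) auto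
qed


lemma exp_abs_ln_le: "0 < (S::real) \<Longrightarrow> exp \<bar>ln S\<bar> \<le> S + 1 / S"
proof -
  assume S: "0 < S"
  show ?thesis
  proof (cases "1 \<le> S")
    case True
    then have "\<bar>ln S\<bar> = ln S" using ln_ge_zero[OF True] by simp
    then show ?thesis using S by simp
  next
    case False
    then have "\<bar>ln S\<bar> = - ln S" using S by simp
    moreover have "exp (- ln S) = 1 / S" using S by (simp add: exp_minus inverse_eq_divide)
    ultimately show ?thesis using S by simp
  qed
qed

lemma exp_s_le_gg:
  assumes S: "0 < S" and H: "0 < H"
  shows "exp (\<bar>ln S\<bar> + \<bar>ln H\<bar>) \<le> gg (S,H,t)"
proof -
  define a where "a = S + 1 / S"
  define c where "c = H + 1 / H"
  have "exp (\<bar>ln S\<bar> + \<bar>ln H\<bar>) = exp \<bar>ln S\<bar> * exp \<bar>ln H\<bar>" by (simp add: exp_add)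
  also have "\<dots> \<le> a * c"
    unfolding a_def c_def using exp_abs_ln_le[OF S] exp_abs_ln_le[OF H] S H
    by (intro mult_mono) (auto intro: add_nonneg_nonneg less_imp_le)
  also have "a * c \<le> (a\<^sup>2 + c\<^sup>2) / 2"
  proof -
    have "0 \<le> (a - c)\<^sup>2" by simp
    then show ?thesis by (simp add: power2_eq_square algebra_simps)
  qed
  also have "a\<^sup>2 = S\<^sup>2 + 1 / S\<^sup>2 + 2" unfolding a_def using S by (simp add: power2_eq_square field_simps)
  also have "c\<^sup>2 = H\<^sup>2 + 1 / H\<^sup>2 + 2" unfolding c_def using H by (simp add: power2_eq_square field_simps)
  also have "(S\<^sup>2 + 1 / S\<^sup>2 + 2 + (H\<^sup>2 + 1 / H\<^sup>2 + 2)) / 2 \<le> gg (S,H,t)"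
  proof -
    have "0 \<le> (S - 1 / S)\<^sup>2" by simp
    then have "2 \<le> S\<^sup>2 + 1 / S\<^sup>2" using S by (simp add: power2_eq_square field_simps)
    moreover have "0 \<le> (H - 1 / H)\<^sup>2" by simp
    then have "2 \<le> H\<^sup>2 + 1 / H\<^sup>2" using H by (simp add: power2_eq_square field_simps)
    ultimately show ?thesis by (simp add: gg_def)
  qed
  finally show ?thesis .
qed

lemma growth_bound:
  fixes u :: "real\<times>real\<times>real \<Rightarrow> real" and K E :: real
  assumes gc: "growth_class T u" and K: "0 \<le> K" and E: "0 \<le> E" and \<epsilon>: "0 < \<epsilon>"
  shows "\<exists>M\<ge>1. \<forall>S H t. (S,H,t) \<in> dom_closed T \<longrightarrow> (S < 1/M \<or> M < S \<or> H < 1/M \<or> M < H) \<longrightarrow>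
            \<bar>u (S,H,t)\<bar> + K + S * E \<le> \<epsilon> * gg (S,H,t)"
proof -
  obtain k where k: "0 < k" and kk: "\<forall>\<epsilon>>0. \<exists>R. \<forall>S H t. (S, H, t) \<in> dom_closed T \<longrightarrow> \<bar>ln S\<bar> + \<bar>ln H\<bar> \<ge> R \<longrightarrow>
        \<bar>u (S, H, t)\<bar> / (1 + (\<bar>ln S\<bar> + \<bar>ln H\<bar>) powr k) \<le> \<epsilon>"
    using gc unfolding growth_class_def by blast
  obtain R where R: "\<forall>S H t. (S, H, t) \<in> dom_closed T \<longrightarrow> \<bar>ln S\<bar> + \<bar>ln H\<bar> \<ge> R \<longrightarrow>
        \<bar>u (S, H, t)\<bar> / (1 + (\<bar>ln S\<bar> + \<bar>ln H\<bar>) powr k) \<le> 1"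
    using kk by (meson zero_less_one)
  have lim: "((\<lambda>y. (1 + ln y powr k + K + E * sqrt y) / y) \<longlongrightarrow> 0) at_top"
    using k by real_asymp
  have "eventually (\<lambda>y. (1 + ln y powr k + K + E * sqrt y) / y < \<epsilon>) at_top"
    by (rule order_tendstoD(2)[OF lim \<epsilon>])
  then obtain Y where Y: "\<And>y. Y \<le> y \<Longrightarrow> (1 + ln y powr k + K + E * sqrt y) / y < \<epsilon>"
    by (auto simp: eventually_at_top_linorder)
  define M where "M = max 1 (max (exp R) (sqrt \<bar>Y\<bar> + 1))"
  have M1: "1 \<le> M" unfolding M_def by simp
  have MR: "R \<le> ln M"
  proof -
    have "exp R \<le> M" unfolding M_def by simp
    then have "ln (exp R) \<le> ln M" using M1 by (subst ln_le_cancel_iff) auto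
    then show ?thesis by simp
  qed
  have MY: "Y \<le> M\<^sup>2"
  proof -
    have "sqrt \<bar>Y\<bar> \<le> M" unfolding M_def by simp
    then have "(sqrt \<bar>Y\<bar>)\<^sup>2 \<le> M\<^sup>2" by (intro power_mono) auto
    then show ?thesis by simp
  qed
  have lnM: "0 \<le> ln M" using M1 by simp
  show ?thesis
  proof (intro exI[of _ M] conjI allI impI M1)
    fix S H t assume D: "(S, H, t) \<in> dom_closed T" and out: "S < 1/M \<or> M < S \<or> H < 1/M \<or> M < H"
    have S: "0 < S" and H: "0 < H" using D by (auto simp: dom_closed_def)
    define G where "G = gg (S,H,t)"
    have G: "G = S\<^sup>2 + 1 / S\<^sup>2 + H\<^sup>2 + 1 / H\<^sup>2" by (simp add: G_def gg_def)
    have nn: "0 \<le> S\<^sup>2" "0 \<le> 1 / S\<^sup>2" "0 \<le> H\<^sup>2" "0 \<le> 1 / H\<^sup>2" by auto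
    have MG: "M\<^sup>2 \<le> G"
    proof -
      have "M\<^sup>2 \<le> S\<^sup>2 \<or> M\<^sup>2 \<le> 1 / S\<^sup>2 \<or> M\<^sup>2 \<le> H\<^sup>2 \<or> M\<^sup>2 \<le> 1 / H\<^sup>2"
      proof -
        have A: "M\<^sup>2 \<le> z\<^sup>2" if "M < z" for z using that M1 by (intro power_mono) auto
        have B: "M\<^sup>2 \<le> 1 / z\<^sup>2" if "z < 1/M" "0 < z" for z
        proof -
          have "M < 1 / z" using that M1 by (simp add: field_simps)
          then have "M\<^sup>2 \<le> (1 / z)\<^sup>2" using M1 by (intro power_mono) auto
          then show ?thesis by (simp add: power_divide)
        qed
        show ?thesis using out A B S H by blast
      qed
      then show ?thesis using nn G by linarith
    qed
    have Gpos: "0 < G" using MG M1 by (smt (verit) one_le_power)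
    have s_ge: "R \<le> \<bar>ln S\<bar> + \<bar>ln H\<bar>"
    proof -
      have "ln M \<le> \<bar>ln S\<bar> \<or> ln M \<le> \<bar>ln H\<bar>"
      proof -
        have A: "ln M \<le> \<bar>ln z\<bar>" if "M < z" for z
        proof -
          have "ln M \<le> ln z" using that M1 by (subst ln_le_cancel_iff) auto
          then show ?thesis by simp
        qed
        have B: "ln M \<le> \<bar>ln z\<bar>" if "z < 1/M" "0 < z" for z
        proof -
          have "z \<le> 1 / M" using that by simp
          then have "ln z \<le> ln (1 / M)" using that M1 by (subst ln_le_cancel_iff) auto
          then have "ln z \<le> - ln M" using M1 by (simp add: ln_div)
          then show ?thesis by simp
        qed
        show ?thesis using out A B S H by blast
      qed
      then show ?thesis using MR by auto
    qed
    have u1: "\<bar>u (S,H,t)\<bar> \<le> 1 + (\<bar>ln S\<bar> + \<bar>ln H\<bar>) powr k"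
    proof -
      have "\<bar>u (S, H, t)\<bar> / (1 + (\<bar>ln S\<bar> + \<bar>ln H\<bar>) powr k) \<le> 1" using R D s_ge by blast
      moreover have "0 < 1 + (\<bar>ln S\<bar> + \<bar>ln H\<bar>) powr k" by (simp add: add_pos_nonneg)
      ultimately show ?thesis by (simp add: divide_le_eq)
    qed
    have "\<bar>ln S\<bar> + \<bar>ln H\<bar> \<le> ln G"
    proof -
      have "exp (\<bar>ln S\<bar> + \<bar>ln H\<bar>) \<le> G" unfolding G_def by (rule exp_s_le_gg[OF S H])
      then have "ln (exp (\<bar>ln S\<bar> + \<bar>ln H\<bar>)) \<le> ln G" using Gpos by (subst ln_le_cancel_iff) auto
      then show ?thesis by simp
    qed
    then have u2: "(\<bar>ln S\<bar> + \<bar>ln H\<bar>) powr k \<le> ln G powr k"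
      using k by (intro powr_mono2) auto
    have "S\<^sup>2 \<le> G" using nn G by linarith
    then have "sqrt (S\<^sup>2) \<le> sqrt G" by (rule real_sqrt_le_mono)
    then have SG: "S \<le> sqrt G" using S by simp
    have SE: "S * E \<le> E * sqrt G" using mult_right_mono[OF SG E] by (simp add: mult.commute)
    have "Y \<le> G" using MY MG by linarith
    then have "(1 + ln G powr k + K + E * sqrt G) / G < \<epsilon>" by (rule Y)
    then have last: "1 + ln G powr k + K + E * sqrt G < \<epsilon> * G" using Gpos by (simp add: divide_less_eq)
    show "\<bar>u (S,H,t)\<bar> + K + S * E \<le> \<epsilon> * gg (S,H,t)"
      using u1 u2 SE last unfolding G_def by linarith
  qed
qed


lemma abs_diff_le: "c * (\<bar>p + q\<bar> - \<bar>p\<bar>) \<le> \<bar>c * q\<bar>" for c p q :: real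
proof -
  have "\<bar>\<bar>p + q\<bar> - \<bar>p\<bar>\<bar> \<le> \<bar>q\<bar>" by linarith
  then have "\<bar>c\<bar> * \<bar>\<bar>p + q\<bar> - \<bar>p\<bar>\<bar> \<le> \<bar>c\<bar> * \<bar>q\<bar>" by (rule mult_left_mono) simp
  moreover have "c * (\<bar>p + q\<bar> - \<bar>p\<bar>) \<le> \<bar>c\<bar> * \<bar>\<bar>p + q\<bar> - \<bar>p\<bar>\<bar>"
    by (metis abs_ge_self abs_mult)
  ultimately show ?thesis by (simp add: abs_mult)
qed

theorem corollary2p6:
  fixes T r rho alpha K mu sig a b :: real
    and P :: "real \<times> real \<times> real \<Rightarrow> real"
  assumes "T > 0" and "r \<ge> 0" and "-1 \<le> rho" and "rho \<le> 1" and "alpha \<ge> 0" and "K > 0"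
    and "mu > 0" and "sig > 0" and "a > 0" and "b > 0"
    and "writer_put_price mu sig a b r rho alpha T K P"
  shows "\<forall>S H t. 0 < S \<longrightarrow> 0 < H \<longrightarrow> 0 \<le> t \<longrightarrow> t < T \<longrightarrow>
    (let tau = T - t;
         mut = mu - (a - r) * rho * sig / b;
         delta = r - mut + alpha * sqrt (1 - rho\<^sup>2) * sig
     in P (S, H, t) =
          K * exp (- r * tau) * Phi ((ln (K / S) - (r - delta - 1/2 * sig\<^sup>2) * tau) / (sig * sqrt tau))
        - S * exp (- delta * tau) * Phi ((ln (K / S) - (r - delta + 1/2 * sig\<^sup>2) * tau) / (sig * sqrt tau)))"
proof -
  note T = assms(1) and r0 = assms(2) and rho = assms(3,4) and alpha0 = assms(5) and K0 = assms(6)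
    and sig0 = assms(8)
  define mut where "mut = mu - (a - r) * rho * sig / b"
  define dl where "dl = r - mut + alpha * sqrt (1 - rho\<^sup>2) * sig"
  interpret bs K r dl sig T using K0 sig0 by unfold_locales
  have Pcont: "continuous_on (dom_closed T) P" and gc: "growth_class T P"
    and sub: "visc_sub mu sig a b r rho alpha T P" and sup: "visc_super mu sig a b r rho alpha T P"
    and termc: "\<And>S H. 0 < S \<Longrightarrow> 0 < H \<Longrightarrow> P (S, H, T) = max (K - S) 0"
    using assms(11) unfolding writer_put_price_def by auto
  have subI: "\<And>phi phit phiS phiH phiSS phiSH phiHH S H t. C2_test (dom_open T) phi phit phiS phiH phiSS phiSH phiHH
      \<Longrightarrow> (S, H, t) \<in> dom_open T
      \<Longrightarrow> (\<exists>e>0. \<forall>y\<in>dom_open T. dist y (S, H, t) < e \<longrightarrow> P y - phi y \<le> P (S, H, t) - phi (S, H, t))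
      \<Longrightarrow> pde_op mu sig a b r rho alpha S H (P (S, H, t)) (phit (S, H, t)) (phiS (S, H, t)) (phiH (S, H, t))
          (phiSS (S, H, t)) (phiSH (S, H, t)) (phiHH (S, H, t)) \<ge> 0"
    using sub unfolding visc_sub_def by blast
  have supI: "\<And>phi phit phiS phiH phiSS phiSH phiHH S H t. C2_test (dom_open T) phi phit phiS phiH phiSS phiSH phiHH
      \<Longrightarrow> (S, H, t) \<in> dom_open T
      \<Longrightarrow> (\<exists>e>0. \<forall>y\<in>dom_open T. dist y (S, H, t) < e \<longrightarrow> P y - phi y \<ge> P (S, H, t) - phi (S, H, t))
      \<Longrightarrow> pde_op mu sig a b r rho alpha S H (P (S, H, t)) (phit (S, H, t)) (phiS (S, H, t)) (phiH (S, H, t))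
          (phiSS (S, H, t)) (phiSH (S, H, t)) (phiHH (S, H, t)) \<le> 0"
    using sup unfolding visc_super_def by blast
  define C where "C = 2 * \<bar>mut\<bar> + 2 * \<bar>r\<bar> + 3 * sig\<^sup>2 + 3 * b\<^sup>2 + 2 * \<bar>alpha\<bar> * sig"
  define lam where "lam = C + 1"
  have C0: "0 \<le> C" unfolding C_def using sig0 by simp
  have lam0: "0 \<le> lam" unfolding lam_def using C0 by simp
  define E where "E = exp (\<bar>dl\<bar> * T)"
  have E0: "0 \<le> E" unfolding E_def by simp
  have GB: "\<And>\<epsilon>. 0 < \<epsilon> \<Longrightarrow> \<exists>M\<ge>1. \<forall>S H t. (S,H,t) \<in> dom_closed T \<longrightarrow> (S < 1/M \<or> M < S \<or> H < 1/M \<or> M < H) \<longrightarrow>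
            \<bar>P (S,H,t)\<bar> + K + S * E \<le> \<epsilon> * gg (S,H,t)"
    using growth_bound[OF gc _ E0] K0 by simp
  have vcT: "vc (S, H, T) = P (S, H, T)" if "0 < S" "0 < H" for S H
    using termc[OF that] vc_T by simp
  have pde_v': "pde_op mu sig a b r rho alpha S H (vf (S,H,t)) (vt (S,H,t)) (vS (S,H,t)) 0 (vSS (S,H,t)) 0 0 = 0"
    if "0 < S" "t < T" for S H t
    by (rule pde_v[OF that]) (simp add: dl_def mut_def)
  have penb: "mut * S * penS T lam \<epsilon> (S,H,t) + r * H * penH T lam \<epsilon> (S,H,t) + 1/2 * sig\<^sup>2 * S\<^sup>2 * penSS T lam \<epsilon> (S,H,t)
       + rho * sig * b * S * H * 0 + 1/2 * b\<^sup>2 * H\<^sup>2 * penHH T lam \<epsilon> (S,H,t)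
       + alpha * sqrt (1 - rho\<^sup>2) * sig * S * (\<bar>vS (S,H,t) + penS T lam \<epsilon> (S,H,t)\<bar> - \<bar>vS (S,H,t)\<bar>)
       \<le> C * (\<epsilon> * exp (lam * (T - t)) * gg (S,H,t))"
    and penb': "- (mut * S * penS T lam \<epsilon> (S,H,t)) - r * H * penH T lam \<epsilon> (S,H,t) - 1/2 * sig\<^sup>2 * S\<^sup>2 * penSS T lam \<epsilon> (S,H,t)
       - rho * sig * b * S * H * 0 - 1/2 * b\<^sup>2 * H\<^sup>2 * penHH T lam \<epsilon> (S,H,t)
       + alpha * sqrt (1 - rho\<^sup>2) * sig * S * (\<bar>vS (S,H,t) + - penS T lam \<epsilon> (S,H,t)\<bar> - \<bar>vS (S,H,t)\<bar>)
       \<ge> - C * (\<epsilon> * exp (lam * (T - t)) * gg (S,H,t))"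
    if "0 < S" "0 < H" "0 \<le> \<epsilon>" for S H t \<epsilon>
  proof -
    have B: "\<bar>mut * S * penS T lam \<epsilon> (S,H,t)\<bar> + \<bar>r * H * penH T lam \<epsilon> (S,H,t)\<bar> + \<bar>1/2 * sig\<^sup>2 * S\<^sup>2 * penSS T lam \<epsilon> (S,H,t)\<bar>
     + \<bar>1/2 * b\<^sup>2 * H\<^sup>2 * penHH T lam \<epsilon> (S,H,t)\<bar> + \<bar>alpha * sqrt (1 - rho\<^sup>2) * sig * S * penS T lam \<epsilon> (S,H,t)\<bar>
     \<le> C * (\<epsilon> * exp (lam * (T - t)) * gg (S,H,t))"
      unfolding C_def by (rule pen_bound[OF that(1,2) sig0 rho that(3)])
    have d1: "alpha * sqrt (1 - rho\<^sup>2) * sig * S * (\<bar>vS (S,H,t) + penS T lam \<epsilon> (S,H,t)\<bar> - \<bar>vS (S,H,t)\<bar>)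
        \<le> \<bar>alpha * sqrt (1 - rho\<^sup>2) * sig * S * penS T lam \<epsilon> (S,H,t)\<bar>"
      by (rule abs_diff_le)
    have d2: "alpha * sqrt (1 - rho\<^sup>2) * sig * S * (\<bar>vS (S,H,t) + - penS T lam \<epsilon> (S,H,t)\<bar> - \<bar>vS (S,H,t)\<bar>)
        \<ge> - \<bar>alpha * sqrt (1 - rho\<^sup>2) * sig * S * penS T lam \<epsilon> (S,H,t)\<bar>"
    proof -
      have "- (alpha * sqrt (1 - rho\<^sup>2) * sig * S) * (\<bar>vS (S,H,t) + - penS T lam \<epsilon> (S,H,t)\<bar> - \<bar>vS (S,H,t)\<bar>)
        \<le> \<bar>- (alpha * sqrt (1 - rho\<^sup>2) * sig * S) * - penS T lam \<epsilon> (S,H,t)\<bar>"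
        by (rule abs_diff_le)
      then show ?thesis by (simp add: abs_mult)
    qed
    show "mut * S * penS T lam \<epsilon> (S,H,t) + r * H * penH T lam \<epsilon> (S,H,t) + 1/2 * sig\<^sup>2 * S\<^sup>2 * penSS T lam \<epsilon> (S,H,t)
       + rho * sig * b * S * H * 0 + 1/2 * b\<^sup>2 * H\<^sup>2 * penHH T lam \<epsilon> (S,H,t)
       + alpha * sqrt (1 - rho\<^sup>2) * sig * S * (\<bar>vS (S,H,t) + penS T lam \<epsilon> (S,H,t)\<bar> - \<bar>vS (S,H,t)\<bar>)
       \<le> C * (\<epsilon> * exp (lam * (T - t)) * gg (S,H,t))"
      using B d1 by linarith
    show "- (mut * S * penS T lam \<epsilon> (S,H,t)) - r * H * penH T lam \<epsilon> (S,H,t) - 1/2 * sig\<^sup>2 * S\<^sup>2 * penSS T lam \<epsilon> (S,H,t)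
       - rho * sig * b * S * H * 0 - 1/2 * b\<^sup>2 * H\<^sup>2 * penHH T lam \<epsilon> (S,H,t)
       + alpha * sqrt (1 - rho\<^sup>2) * sig * S * (\<bar>vS (S,H,t) + - penS T lam \<epsilon> (S,H,t)\<bar> - \<bar>vS (S,H,t)\<bar>)
       \<ge> - C * (\<epsilon> * exp (lam * (T - t)) * gg (S,H,t))"
      using B d2 by linarith
  qed
  have le: "P x \<le> vc x" if x: "x \<in> dom_open T" for x
  proof (rule ccontr)
    assume "\<not> P x \<le> vc x"
    then have pos: "0 < P x - vc x" by simp
    have "\<exists>\<epsilon>>0. \<exists>\<eta>>0. \<exists>q\<in>dom_open T. (\<forall>y\<in>dom_open T. (P y - vc y) - pen T lam \<epsilon> \<eta> y \<le> (P q - vc q) - pen T lam \<epsilon> \<eta> q)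
            \<and> 0 < (P q - vc q) - pen T lam \<epsilon> \<eta> q"
    proof (rule max_lemma[where w="\<lambda>y. P y - vc y" and pz=x and T=T and lam=lam, OF T lam0 _ _ _ x pos])
      show "continuous_on (dom_closed T) (\<lambda>y. P y - vc y)" by (intro continuous_on_diff Pcont vc_cont)
      show "P (S, H, T) - vc (S, H, T) \<le> 0" if "0 < S" "0 < H" for S H using vcT[OF that] by simp
      fix \<epsilon> :: real assume "0 < \<epsilon>"
      from GB[OF this] obtain M where M: "1 \<le> M" "\<forall>S H t. (S,H,t) \<in> dom_closed T \<longrightarrow> (S < 1/M \<or> M < S \<or> H < 1/M \<or> M < H) \<longrightarrow>
            \<bar>P (S,H,t)\<bar> + K + S * E \<le> \<epsilon> * gg (S,H,t)" by blast
      show "\<exists>M\<ge>1. \<forall>S H t. (S,H,t) \<in> dom_closed T \<longrightarrow> (S < 1/M \<or> M < S \<or> H < 1/M \<or> M < H) \<longrightarrow>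
            P (S,H,t) - vc (S,H,t) \<le> \<epsilon> * gg (S,H,t)"
      proof (intro exI[of _ M] conjI allI impI M(1))
        fix S H t assume D: "(S,H,t) \<in> dom_closed T" and o: "S < 1/M \<or> M < S \<or> H < 1/M \<or> M < H"
        have "- vc (S,H,t) \<le> S * E" using vc_lower[OF D] unfolding E_def by simp
        moreover have "P (S,H,t) \<le> \<bar>P (S,H,t)\<bar>" by simp
        moreover have "\<bar>P (S,H,t)\<bar> + K + S * E \<le> \<epsilon> * gg (S,H,t)" using M(2) D o by blast
        ultimately show "P (S,H,t) - vc (S,H,t) \<le> \<epsilon> * gg (S,H,t)" using K0 by linarith
      qed
    qed
    then obtain \<epsilon> \<eta> q where \<epsilon>: "0 < \<epsilon>" and \<eta>: "0 < \<eta>" and qD: "q \<in> dom_open T"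
      and qmax: "\<forall>y\<in>dom_open T. (P y - vc y) - pen T lam \<epsilon> \<eta> y \<le> (P q - vc q) - pen T lam \<epsilon> \<eta> q"
      and qpos: "0 < (P q - vc q) - pen T lam \<epsilon> \<eta> q" by blast
    obtain S H t where qe: "q = (S,H,t)" "0 < S" "0 < H" "0 < t" "t < T"
      using qD by (cases q) (auto simp: dom_open_def)
    have C2: "C2_test (dom_open T) (\<lambda>x. vf x + pen T lam \<epsilon> \<eta> x) (\<lambda>x. vt x + pent T lam \<epsilon> \<eta> x)
        (\<lambda>x. vS x + penS T lam \<epsilon> x) (\<lambda>x. 0 + penH T lam \<epsilon> x) (\<lambda>x. vSS x + penSS T lam \<epsilon> x)
        (\<lambda>x. 0 + 0) (\<lambda>x. 0 + penHH T lam \<epsilon> x)"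
      by (rule C2_add[OF C2_v C2_pen])
    have vfc: "vc y = vf y" if "y \<in> dom_open T" for y
      using that by (intro vc_eq) (auto simp: dom_open_def)
    have locmax: "\<exists>e>0. \<forall>y\<in>dom_open T. dist y (S, H, t) < e \<longrightarrow>
        P y - (vf y + pen T lam \<epsilon> \<eta> y) \<le> P (S, H, t) - (vf (S, H, t) + pen T lam \<epsilon> \<eta> (S, H, t))"
    proof (intro exI[of _ 1] conjI ballI impI)
      fix y assume y: "y \<in> dom_open T"
      show "P y - (vf y + pen T lam \<epsilon> \<eta> y) \<le> P (S, H, t) - (vf (S, H, t) + pen T lam \<epsilon> \<eta> (S, H, t))"
        using qmax[rule_format, OF y] vfc[OF y] vfc[OF qD] qe(1) by simp
    qed simp
    note ineq = subI[OF C2 qD[unfolded qe(1)] locmax]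
    define X where "X = \<epsilon> * exp (lam * (T - t)) * gg (S,H,t)"
    have X0: "0 \<le> X" unfolding X_def using \<epsilon> gg_pos[of "(S,H,t)"] qe by simp
    have pent_eq: "pent T lam \<epsilon> \<eta> (S,H,t) = - lam * X - \<eta> / t\<^sup>2" by (simp add: pent_def X_def)
    have pen_nn: "0 \<le> pen T lam \<epsilon> \<eta> (S,H,t)" unfolding pen_def using X0 \<eta> qe by (simp add: X_def)
    have "vc (S,H,t) = vf (S,H,t)" using vfc[OF qD] qe(1) by simp
    then have "0 < (P (S,H,t) - vf (S,H,t)) - pen T lam \<epsilon> \<eta> (S,H,t)" using qpos qe(1) by simp
    then have diffpos: "0 < P (S,H,t) - vf (S,H,t)" using pen_nn by linarith
    have lamX: "lam * X = C * X + X" unfolding lam_def by (simp add: algebra_simps)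
    have "pde_op mu sig a b r rho alpha S H (P (S,H,t)) (vt (S,H,t) + pent T lam \<epsilon> \<eta> (S,H,t))
        (vS (S,H,t) + penS T lam \<epsilon> (S,H,t)) (0 + penH T lam \<epsilon> (S,H,t)) (vSS (S,H,t) + penSS T lam \<epsilon> (S,H,t))
        (0 + 0) (0 + penHH T lam \<epsilon> (S,H,t))
      = pde_op mu sig a b r rho alpha S H (vf (S,H,t)) (vt (S,H,t)) (vS (S,H,t)) 0 (vSS (S,H,t)) 0 0
        + (pent T lam \<epsilon> \<eta> (S,H,t) + mut * S * penS T lam \<epsilon> (S,H,t) + r * H * penH T lam \<epsilon> (S,H,t)
           + 1/2 * sig\<^sup>2 * S\<^sup>2 * penSS T lam \<epsilon> (S,H,t) + rho * sig * b * S * H * 0 + 1/2 * b\<^sup>2 * H\<^sup>2 * penHH T lam \<epsilon> (S,H,t))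
        - r * (P (S,H,t) - vf (S,H,t))
        + alpha * sqrt (1 - rho\<^sup>2) * sig * S * (\<bar>vS (S,H,t) + penS T lam \<epsilon> (S,H,t)\<bar> - \<bar>vS (S,H,t)\<bar>)"
      unfolding mut_def by (rule pde_split)
    also have "\<dots> \<le> 0 + (- lam * X - \<eta> / t\<^sup>2) + C * X - 0"
    proof -
      have "0 \<le> r * (P (S,H,t) - vf (S,H,t))" using r0 diffpos by simp
      moreover have "mut * S * penS T lam \<epsilon> (S,H,t) + r * H * penH T lam \<epsilon> (S,H,t) + 1/2 * sig\<^sup>2 * S\<^sup>2 * penSS T lam \<epsilon> (S,H,t)
       + rho * sig * b * S * H * 0 + 1/2 * b\<^sup>2 * H\<^sup>2 * penHH T lam \<epsilon> (S,H,t)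
       + alpha * sqrt (1 - rho\<^sup>2) * sig * S * (\<bar>vS (S,H,t) + penS T lam \<epsilon> (S,H,t)\<bar> - \<bar>vS (S,H,t)\<bar>)
       \<le> C * X" unfolding X_def by (rule penb[OF qe(2) qe(3) less_imp_le[OF \<epsilon>]])
      ultimately show ?thesis
        using pde_v'[OF qe(2) qe(5), of H] pent_eq by linarith
    qed
    also have "\<dots> < 0"
    proof -
      have "0 < \<eta> / t\<^sup>2" using \<eta> qe by simp
      then show ?thesis using X0 lamX by linarith
    qed
    finally show False using ineq by simp
  qed
  have ge: "vc x \<le> P x" if x: "x \<in> dom_open T" for x
  proof (rule ccontr)
    assume "\<not> vc x \<le> P x"
    then have pos: "0 < vc x - P x" by simp
    have "\<exists>\<epsilon>>0. \<exists>\<eta>>0. \<exists>q\<in>dom_open T. (\<forall>y\<in>dom_open T. (vc y - P y) - pen T lam \<epsilon> \<eta> y \<le> (vc q - P q) - pen T lam \<epsilon> \<eta> q)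
            \<and> 0 < (vc q - P q) - pen T lam \<epsilon> \<eta> q"
    proof (rule max_lemma[where w="\<lambda>y. vc y - P y" and pz=x and T=T and lam=lam, OF T lam0 _ _ _ x pos])
      show "continuous_on (dom_closed T) (\<lambda>y. vc y - P y)" by (intro continuous_on_diff Pcont vc_cont)
      show "vc (S, H, T) - P (S, H, T) \<le> 0" if "0 < S" "0 < H" for S H using vcT[OF that] by simp
      fix \<epsilon> :: real assume "0 < \<epsilon>"
      from GB[OF this] obtain M where M: "1 \<le> M" "\<forall>S H t. (S,H,t) \<in> dom_closed T \<longrightarrow> (S < 1/M \<or> M < S \<or> H < 1/M \<or> M < H) \<longrightarrow>
            \<bar>P (S,H,t)\<bar> + K + S * E \<le> \<epsilon> * gg (S,H,t)" by blast
      show "\<exists>M\<ge>1. \<forall>S H t. (S,H,t) \<in> dom_closed T \<longrightarrow> (S < 1/M \<or> M < S \<or> H < 1/M \<or> M < H) \<longrightarrow>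
            vc (S,H,t) - P (S,H,t) \<le> \<epsilon> * gg (S,H,t)"
      proof (intro exI[of _ M] conjI allI impI M(1))
        fix S H t assume D: "(S,H,t) \<in> dom_closed T" and o: "S < 1/M \<or> M < S \<or> H < 1/M \<or> M < H"
        have "vc (S,H,t) \<le> K" using vc_upper[OF r0 D] .
        moreover have "- P (S,H,t) \<le> \<bar>P (S,H,t)\<bar>" by simp
        moreover have "0 \<le> S * E" using D E0 by (auto simp: dom_closed_def)
        moreover have "\<bar>P (S,H,t)\<bar> + K + S * E \<le> \<epsilon> * gg (S,H,t)" using M(2) D o by blast
        ultimately show "vc (S,H,t) - P (S,H,t) \<le> \<epsilon> * gg (S,H,t)" by linarith
      qed
    qed
    then obtain \<epsilon> \<eta> q where \<epsilon>: "0 < \<epsilon>" and \<eta>: "0 < \<eta>" and qD: "q \<in> dom_open T"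
      and qmax: "\<forall>y\<in>dom_open T. (vc y - P y) - pen T lam \<epsilon> \<eta> y \<le> (vc q - P q) - pen T lam \<epsilon> \<eta> q"
      and qpos: "0 < (vc q - P q) - pen T lam \<epsilon> \<eta> q" by blast
    obtain S H t where qe: "q = (S,H,t)" "0 < S" "0 < H" "0 < t" "t < T"
      using qD by (cases q) (auto simp: dom_open_def)
    have C2: "C2_test (dom_open T) (\<lambda>x. vf x + - pen T lam \<epsilon> \<eta> x) (\<lambda>x. vt x + - pent T lam \<epsilon> \<eta> x)
        (\<lambda>x. vS x + - penS T lam \<epsilon> x) (\<lambda>x. 0 + - penH T lam \<epsilon> x) (\<lambda>x. vSS x + - penSS T lam \<epsilon> x)
        (\<lambda>x. 0 + - 0) (\<lambda>x. 0 + - penHH T lam \<epsilon> x)"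
      by (rule C2_add[OF C2_v C2_neg[OF C2_pen]])
    have vfc: "vc y = vf y" if "y \<in> dom_open T" for y
      using that by (intro vc_eq) (auto simp: dom_open_def)
    have locmin: "\<exists>e>0. \<forall>y\<in>dom_open T. dist y (S, H, t) < e \<longrightarrow>
        P y - (vf y + - pen T lam \<epsilon> \<eta> y) \<ge> P (S, H, t) - (vf (S, H, t) + - pen T lam \<epsilon> \<eta> (S, H, t))"
    proof (intro exI[of _ 1] conjI ballI impI)
      fix y assume y: "y \<in> dom_open T"
      show "P y - (vf y + - pen T lam \<epsilon> \<eta> y) \<ge> P (S, H, t) - (vf (S, H, t) + - pen T lam \<epsilon> \<eta> (S, H, t))"
        using qmax[rule_format, OF y] vfc[OF y] vfc[OF qD] qe(1) by simp
    qed simp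
    note ineq = supI[OF C2 qD[unfolded qe(1)] locmin]
    define X where "X = \<epsilon> * exp (lam * (T - t)) * gg (S,H,t)"
    have X0: "0 \<le> X" unfolding X_def using \<epsilon> gg_pos[of "(S,H,t)"] qe by simp
    have pent_eq: "pent T lam \<epsilon> \<eta> (S,H,t) = - lam * X - \<eta> / t\<^sup>2" by (simp add: pent_def X_def)
    have pen_nn: "0 \<le> pen T lam \<epsilon> \<eta> (S,H,t)" unfolding pen_def using X0 \<eta> qe by (simp add: X_def)
    have "vc (S,H,t) = vf (S,H,t)" using vfc[OF qD] qe(1) by simp
    then have "0 < (vf (S,H,t) - P (S,H,t)) - pen T lam \<epsilon> \<eta> (S,H,t)" using qpos qe(1) by simp
    then have diffpos: "0 < vf (S,H,t) - P (S,H,t)" using pen_nn by linarith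
    have lamX: "lam * X = C * X + X" unfolding lam_def by (simp add: algebra_simps)
    have "pde_op mu sig a b r rho alpha S H (P (S,H,t)) (vt (S,H,t) + - pent T lam \<epsilon> \<eta> (S,H,t))
        (vS (S,H,t) + - penS T lam \<epsilon> (S,H,t)) (0 + - penH T lam \<epsilon> (S,H,t)) (vSS (S,H,t) + - penSS T lam \<epsilon> (S,H,t))
        (0 + - 0) (0 + - penHH T lam \<epsilon> (S,H,t))
      = pde_op mu sig a b r rho alpha S H (vf (S,H,t)) (vt (S,H,t)) (vS (S,H,t)) 0 (vSS (S,H,t)) 0 0
        + (- pent T lam \<epsilon> \<eta> (S,H,t) + mut * S * - penS T lam \<epsilon> (S,H,t) + r * H * - penH T lam \<epsilon> (S,H,t)
           + 1/2 * sig\<^sup>2 * S\<^sup>2 * - penSS T lam \<epsilon> (S,H,t) + rho * sig * b * S * H * - 0 + 1/2 * b\<^sup>2 * H\<^sup>2 * - penHH T lam \<epsilon> (S,H,t))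
        - r * (P (S,H,t) - vf (S,H,t))
        + alpha * sqrt (1 - rho\<^sup>2) * sig * S * (\<bar>vS (S,H,t) + - penS T lam \<epsilon> (S,H,t)\<bar> - \<bar>vS (S,H,t)\<bar>)"
      unfolding mut_def by (rule pde_split)
    also have "\<dots> \<ge> 0 + (lam * X + \<eta> / t\<^sup>2) - C * X + 0"
    proof -
      have "r * (P (S,H,t) - vf (S,H,t)) \<le> 0" using mult_nonneg_nonpos[OF r0, of "P (S,H,t) - vf (S,H,t)"] diffpos by simp
      then have "0 \<le> - r * (P (S,H,t) - vf (S,H,t))" by simp
      moreover have "- (mut * S * penS T lam \<epsilon> (S,H,t)) - r * H * penH T lam \<epsilon> (S,H,t) - 1/2 * sig\<^sup>2 * S\<^sup>2 * penSS T lam \<epsilon> (S,H,t)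
       - rho * sig * b * S * H * 0 - 1/2 * b\<^sup>2 * H\<^sup>2 * penHH T lam \<epsilon> (S,H,t)
       + alpha * sqrt (1 - rho\<^sup>2) * sig * S * (\<bar>vS (S,H,t) + - penS T lam \<epsilon> (S,H,t)\<bar> - \<bar>vS (S,H,t)\<bar>)
       \<ge> - C * X" unfolding X_def by (rule penb'[OF qe(2) qe(3) less_imp_le[OF \<epsilon>]])
      ultimately show ?thesis
        using pde_v'[OF qe(2) qe(5), of H] pent_eq by (simp add: algebra_simps)
    qed
    finally have "0 + (lam * X + \<eta> / t\<^sup>2) - C * X + 0 \<le> 0" using ineq by linarith
    moreover have "0 < \<eta> / t\<^sup>2" using \<eta> qe by simp
    ultimately show False using X0 lamX by linarith
  qed
  have eq_open: "P x = vf x" if "x \<in> dom_open T" for x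
    using le[OF that] ge[OF that] vc_eq[of x] that by (auto simp: dom_open_def)
  show ?thesis
  proof (intro allI impI)
    fix S H t :: real assume S: "0 < S" and H: "0 < H" and t0: "0 \<le> t" and tT: "t < T"
    have Peq: "P (S,H,t) = vf (S,H,t)"
    proof (cases "0 < t")
      case True
      then show ?thesis using eq_open S H tT by (simp add: dom_open_def)
    next
      case False
      then have t: "t = 0" using t0 by simp
      define f where "f = (\<lambda>y. P y - vc y)"
      have fc: "continuous_on (dom_closed T) f" unfolding f_def by (intro continuous_on_diff Pcont vc_cont)
      have x0: "(S,H,0) \<in> dom_closed T" using S H T by (simp add: dom_closed_def)
      define ys where "ys = (\<lambda>n::nat. (S, H, T / (real n + 2)))"
      have ysD: "ys n \<in> dom_open T" for n
      proof -
        have "0 < T / (real n + 2)" using T by simp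
        moreover have "T / (real n + 2) < T" using T by (simp add: divide_less_eq)
        ultimately show ?thesis using S H by (simp add: ys_def dom_open_def)
      qed
      have "(\<lambda>n. T / (real n + 2)) \<longlonglongrightarrow> 0" by real_asymp
      then have ylim: "ys \<longlonglongrightarrow> (S,H,0)" unfolding ys_def by (intro tendsto_Pair tendsto_const)
      have "continuous (at (S,H,0) within dom_closed T) f"
        using fc x0 by (simp add: continuous_on_eq_continuous_within)
      moreover have "\<forall>n. ys n \<in> dom_closed T"
      proof
        fix n
        have sub_oc: "dom_open T \<subseteq> dom_closed T" by (auto simp: dom_open_def dom_closed_def)
        show "ys n \<in> dom_closed T" using subsetD[OF sub_oc ysD[of n]] .
      qed
      ultimately have "(f \<circ> ys) \<longlonglongrightarrow> f (S,H,0)"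
        using ylim continuous_within_sequentially by blast
      moreover have "(f \<circ> ys) = (\<lambda>n. 0)"
      proof
        fix n show "(f \<circ> ys) n = 0" using le[OF ysD[of n]] ge[OF ysD[of n]] by (simp add: f_def)
      qed
      ultimately have "f (S,H,0) = 0" using LIMSEQ_unique tendsto_const by metis
      then show ?thesis using t vc_eq[of "(S,H,0)"] T by (simp add: f_def)
    qed
    show "let tau = T - t; mut = mu - (a - r) * rho * sig / b; delta = r - mut + alpha * sqrt (1 - rho\<^sup>2) * sig
     in P (S, H, t) =
          K * exp (- r * tau) * Phi ((ln (K / S) - (r - delta - 1/2 * sig\<^sup>2) * tau) / (sig * sqrt tau))
        - S * exp (- delta * tau) * Phi ((ln (K / S) - (r - delta + 1/2 * sig\<^sup>2) * tau) / (sig * sqrt tau))"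
      unfolding Let_def Peq unfolding vf_def A_def B_def c1_def c2_def unfolding dl_def mut_def by simp
  qed
qed

end
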